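(* Let $\{g_n\}_{n=1}^\infty$ be a nested sequence of geodesics in the unit disk $\mathbb{D}$ such that any two adjacent geodesics $g_n,g_{n+1}$ share an ideal endpoint and no three of the geodesics share an ideal endpoint. Fix $P_1\in g_1$ and let $h$ be the piecewise horocyclic path starting at $P_1$ that is the concatenation of horocyclic arcs $h_n$, where $h_n$ lies in the wedge $W_n$ between $g_n$ and $g_{n+1}$, is orthogonal to both, lies on a horocycle centered at the common endpoint of $g_n$ and $g_{n+1}$, and starts at the endpoint of $h_{n-1}$ on $g_n$ (with $h_1$ starting at $P_1$). Then the sequence $\{g_n\}$ accumulates to a single point of $S^1$ if and only if $h$ has infinite hyperbolic length.
   Context: Nested means that for each $n\ge2$ the geodesics $g_{n-1}$ and $g_{n+1}$ lie in different components of $\mathbb{D}\setminus g_n$. The wedge $W_n$ is the region between $g_n$ and $g_{n+1}$; its vertex is their common ideal endpoint. A nested sequence either accumulates to a single point of $S^1$ or to a geodesic in $\mathbb{D}$. *)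

theory Defs
  imports "HOL-Analysis.Analysis"
begin

abbreviation Disk :: "complex set" where "Disk \<equiv> ball 0 1"

text \<open>A geodesic of the disk is given by its (ordered pair of) distinct ideal endpoints.\<close>
definition is_geod :: "complex \<times> complex \<Rightarrow> bool" where
  "is_geod G \<longleftrightarrow> cmod (fst G) = 1 \<and> cmod (snd G) = 1 \<and> fst G \<noteq> snd G"

definition ends :: "complex \<times> complex \<Rightarrow> complex set" where
  "ends G = {fst G, snd G}"

text \<open>Point set of the geodesic with endpoints a, b: the arc of the circle (or diameter)
  through a and b orthogonal to the unit circle.  The Moebius map z \<mapsto> (z-a)/(z-b)
  sends the unit circle to the line {u. cnj u = (b/a) u} and the geodesic to the
  orthogonal line {u. cnj u = -(b/a) u}.\<close>
definition geod_set :: "complex \<times> complex \<Rightarrow> complex set" where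
  "geod_set G = (let a = fst G; b = snd G in
     {z. cmod z < 1 \<and> cnj ((z - a) / (z - b)) = - (b / a) * ((z - a) / (z - b))})"

definition nested :: "(nat \<Rightarrow> complex \<times> complex) \<Rightarrow> bool" where
  "nested g \<longleftrightarrow> (\<forall>n\<ge>1.
      geod_set (g (n - 1)) \<inter> geod_set (g n) = {} \<and>
      geod_set (g (Suc n)) \<inter> geod_set (g n) = {} \<and>
      (\<forall>x\<in>geod_set (g (n - 1)). \<forall>y\<in>geod_set (g (Suc n)).
          \<not> connected_component (Disk - geod_set (g n)) x y))"

definition wedge :: "complex \<times> complex \<Rightarrow> complex \<times> complex \<Rightarrow> complex set" where
  "wedge G H = {z. z \<in> Disk - geod_set G - geod_set H \<and>
      (\<exists>y\<in>geod_set H. connected_component (Disk - geod_set G) z y) \<and>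
      (\<exists>y\<in>geod_set G. connected_component (Disk - geod_set H) z y)}"

text \<open>Horocycle centred at the ideal point p: a Euclidean circle of radius r (0<r<1)
  internally tangent to the unit circle at p, with p removed.\<close>
definition horocycle :: "complex \<Rightarrow> real \<Rightarrow> complex set" where
  "horocycle p r = {z. cmod (z - of_real (1 - r) * p) = r \<and> z \<noteq> p}"

text \<open>Hyperbolic length (curvature -1) of a C1 path in the disk.\<close>
definition hyp_length :: "(real \<Rightarrow> complex) \<Rightarrow> real" where
  "hyp_length \<gamma> = integral {0..1}
      (\<lambda>t. 2 * norm (vector_derivative \<gamma> (at t)) / (1 - (cmod (\<gamma> t))\<^sup>2))"

definition accumulates_to_point :: "(nat \<Rightarrow> complex \<times> complex) \<Rightarrow> complex \<Rightarrow> bool" where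
  "accumulates_to_point g \<xi> \<longleftrightarrow> cmod \<xi> = 1 \<and>
      (\<forall>e>0. \<exists>N. \<forall>n\<ge>N. geod_set (g n) \<subseteq> ball \<xi> e)"

end

theory Submission
  imports Defs
begin



definition cay :: "complex \<Rightarrow> complex \<Rightarrow> complex" where
  "cay p z = \<i> * (p + z) / (p - z)"
definition icay :: "complex \<Rightarrow> complex \<Rightarrow> complex" where
  "icay p w = p * (w - \<i>) / (w + \<i>)"
definition Eg :: "complex \<Rightarrow> complex \<Rightarrow> complex \<Rightarrow> complex" where
  "Eg a b z = (a + b) * (z * cnj z + 1) - 2 * (z + a * b * cnj z)"
definition Nf :: "real \<Rightarrow> real \<Rightarrow> complex \<Rightarrow> real" where
  "Nf s t w = (Re w - s) * (Re w - t) + (Im w)^2"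

lemma norm_sq: "cmod z * cmod z = Re z * Re z + Im z * Im z"
  by (metis cmod_power2 power2_eq_square)

lemma Eg_sym: "Eg a b z = Eg b a z"
  unfolding Eg_def by (simp add: algebra_simps)

lemma Nf_sym: "Nf s t w = Nf t s w"
  unfolding Nf_def by (simp add: algebra_simps)

lemma unit_cnj: "cmod q = 1 \<Longrightarrow> q * cnj q = 1"
  by (metis complex_norm_square mult.commute of_real_1 power_one)

lemma unit_nz: "cmod q = 1 \<Longrightarrow> q \<noteq> 0"
  by auto

lemma plus_i_nz: "Im w > -1 \<Longrightarrow> w + \<i> \<noteq> 0"
  by (auto simp: complex_eq_iff)

lemma real_plus_i_nz: "complex_of_real s + \<i> \<noteq> 0"
  by (auto simp: complex_eq_iff)

lemma icay_cay: "cmod q = 1 \<Longrightarrow> z \<noteq> q \<Longrightarrow> icay q (cay q z) = z"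
proof -
  assume q: "cmod q = 1" and z: "z \<noteq> q"
  have q0: "q \<noteq> 0" using q by auto
  have d: "q - z \<noteq> 0" using z by auto
  have d2: "\<i> * (q + z) / (q - z) + \<i> \<noteq> 0"
  proof
    assume "\<i> * (q + z) / (q - z) + \<i> = 0"
    then have "\<i> * (q + z) + \<i> * (q - z) = 0" using d by (simp add: field_simps)
    then have "2 * \<i> * q = 0" by (simp add: algebra_simps)
    then show False using q0 by simp
  qed
  show ?thesis unfolding icay_def cay_def using d d2 q0
    by (simp add: field_simps)
qed

lemma cay_icay: "cmod q = 1 \<Longrightarrow> w \<noteq> - \<i> \<Longrightarrow> cay q (icay q w) = w"
proof -
  assume q: "cmod q = 1" and w: "w \<noteq> - \<i>"
  have q0: "q \<noteq> 0" using q by auto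
  have d: "w + \<i> \<noteq> 0" using w by (auto simp: complex_eq_iff)
  have "q - q * (w - \<i>) / (w + \<i>) = 2 * \<i> * q / (w + \<i>)"
    using d by (simp add: field_simps)
  moreover have "q + q * (w - \<i>) / (w + \<i>) = 2 * w * q / (w + \<i>)"
    using d by (simp add: field_simps)
  ultimately have "cay q (icay q w) = \<i> * (2 * w * q / (w + \<i>)) / (2 * \<i> * q / (w + \<i>))"
    unfolding cay_def icay_def by simp
  also have "\<dots> = w"
  proof -
    have nz: "2 * \<i> * q / (w + \<i>) \<noteq> 0" using d q0 by simp
    have "\<i> * (2 * w * q / (w + \<i>)) = w * (2 * \<i> * q / (w + \<i>))" by (simp add: algebra_simps)
    then show ?thesis using nz by (metis nonzero_mult_div_cancel_right)
  qed
  finally show ?thesis .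
qed

lemma Im_cay: assumes "cmod q = 1" "z \<noteq> q"
  shows "Im (cay q z) = (1 - (cmod z)^2) / (cmod (q - z))^2"
proof -
  have qq: "q * cnj q = 1" using assms unit_cnj by blast
  have d: "q - z \<noteq> 0" using assms by auto
  have d': "cnj (q - z) \<noteq> 0" using d by simp
  have "cay q z = \<i> * (q + z) * cnj (q - z) / ((q - z) * cnj (q - z))"
    unfolding cay_def using d d' by simp
  also have "(q - z) * cnj (q - z) = of_real ((cmod (q - z))^2)"
    by (metis complex_norm_square)
  also have "\<i> * (q + z) * cnj (q - z) = \<i> * (q * cnj q - z * cnj z) + \<i> * (z * cnj q - q * cnj z)"
    by (simp add: algebra_simps)
  also have "\<dots> = \<i> * of_real (1 - (cmod z)^2) - 2 * of_real (Im (z * cnj q))"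
    using qq by (simp add: complex_norm_square complex_eq_iff algebra_simps cmod_power2 power2_eq_square norm_sq)
  finally show ?thesis
    by (simp add: Im_divide_of_real)
qed

lemma Re_cay: assumes "cmod q = 1" "z \<noteq> q"
  shows "Re (cay q z) = - 2 * Im (z * cnj q) / (cmod (q - z))^2"
proof -
  have qq: "q * cnj q = 1" using assms unit_cnj by blast
  have d: "q - z \<noteq> 0" using assms by auto
  have d': "cnj (q - z) \<noteq> 0" using d by simp
  have "cay q z = \<i> * (q + z) * cnj (q - z) / ((q - z) * cnj (q - z))"
    unfolding cay_def using d d' by simp
  also have "(q - z) * cnj (q - z) = of_real ((cmod (q - z))^2)"
    by (metis complex_norm_square)
  also have "\<i> * (q + z) * cnj (q - z) = \<i> * (q * cnj q - z * cnj z) + \<i> * (z * cnj q - q * cnj z)"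
    by (simp add: algebra_simps)
  also have "\<dots> = \<i> * of_real (1 - (cmod z)^2) - 2 * of_real (Im (z * cnj q))"
    using qq by (simp add: complex_norm_square complex_eq_iff algebra_simps cmod_power2 power2_eq_square norm_sq)
  finally show ?thesis
    by (simp add: Re_divide_of_real)
qed

lemma gen0: fixes q qc w wc s t A B Z Zc ii :: complex
  assumes qq: "q * qc = 1" and "A * (s + ii) = s - ii" "B * (t + ii) = t - ii" "Z * (w + ii) = w - ii"
    "Zc * (wc - ii) = wc + ii" "ii * ii = -1"
  shows "((q*A + q*B) * ((q*Z) * (qc*Zc) + 1) - 2 * (q*Z + (q*A) * (q*B) * (qc*Zc)))
     * ((s + ii) * (t + ii) * (w + ii) * (wc - ii))
     = 2 * q * ((w + wc - 2 * s) * (w + wc - 2 * t) - (w - wc)^2)"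
  using assms by algebra

lemma gen1: fixes q qc w wc t B Z Zc ii :: complex
  assumes qq: "q * qc = 1" and "B * (t + ii) = t - ii" "Z * (w + ii) = w - ii"
    "Zc * (wc - ii) = wc + ii" "ii * ii = -1"
  shows "((q + q*B) * ((q*Z) * (qc*Zc) + 1) - 2 * (q*Z + q * (q*B) * (qc*Zc)))
     * ((t + ii) * (w + ii) * (wc - ii))
     = 4 * q * (2 * t - (w + wc))"
  using assms by algebra

lemma cnj_icay: "cnj (icay q w) = cnj q * ((cnj w + \<i>) / (cnj w - \<i>))"
  unfolding icay_def by simp

lemma icay_eq: "icay q w = q * ((w - \<i>) / (w + \<i>))"
  unfolding icay_def by simp

lemma Eg_icay:
  assumes q: "cmod q = 1" and w: "Im w > 0"
  shows "Eg (icay q (of_real s)) (icay q (of_real t)) (icay q w) * ((of_real s + \<i>) * (of_real t + \<i>) * (w + \<i>) * (cnj w - \<i>))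
     = 8 * q * of_real (Nf s t w)"
proof -
  have qq: "q * cnj q = 1" using q unit_cnj by blast
  have w1: "w + \<i> \<noteq> 0" using w by (auto simp: complex_eq_iff)
  have w2: "cnj w - \<i> \<noteq> 0" using w by (auto simp: complex_eq_iff)
  have s1: "of_real s + \<i> \<noteq> 0" by (auto simp: complex_eq_iff)
  have t1: "of_real t + \<i> \<noteq> 0" by (auto simp: complex_eq_iff)
  have g: "((q*((of_real s - \<i>) / (of_real s + \<i>)) + q*((of_real t - \<i>) / (of_real t + \<i>))) * ((q*((w - \<i>) / (w + \<i>))) * (cnj q*((cnj w + \<i>) / (cnj w - \<i>))) + 1)
     - 2 * (q*((w - \<i>) / (w + \<i>)) + (q*((of_real s - \<i>) / (of_real s + \<i>))) * (q*((of_real t - \<i>) / (of_real t + \<i>))) * (cnj q*((cnj w + \<i>) / (cnj w - \<i>)))))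
     * ((of_real s + \<i>) * (of_real t + \<i>) * (w + \<i>) * (cnj w - \<i>))
     = 2 * q * ((w + cnj w - 2 * of_real s) * (w + cnj w - 2 * of_real t) - (w - cnj w)^2)"
    by (rule gen0[OF qq]) (use w1 w2 s1 t1 in simp_all)
  have r: "(w + cnj w - 2 * of_real s) * (w + cnj w - 2 * of_real t) - (w - cnj w)^2 = 4 * of_real (Nf s t w)"
    unfolding Nf_def by (simp add: complex_eq_iff power2_eq_square algebra_simps)
  show ?thesis
    using g unfolding Eg_def cnj_icay icay_eq r by simp
qed

lemma Eg_icay_q:
  assumes q: "cmod q = 1" and w: "Im w > 0"
  shows "Eg q (icay q (of_real t)) (icay q w) * ((of_real t + \<i>) * (w + \<i>) * (cnj w - \<i>))
     = 8 * q * of_real (t - Re w)"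
proof -
  have qq: "q * cnj q = 1" using q unit_cnj by blast
  have w1: "w + \<i> \<noteq> 0" using w by (auto simp: complex_eq_iff)
  have w2: "cnj w - \<i> \<noteq> 0" using w by (auto simp: complex_eq_iff)
  have t1: "of_real t + \<i> \<noteq> 0" by (auto simp: complex_eq_iff)
  have g: "((q + q*((of_real t - \<i>) / (of_real t + \<i>))) * ((q*((w - \<i>) / (w + \<i>))) * (cnj q*((cnj w + \<i>) / (cnj w - \<i>))) + 1)
     - 2 * (q*((w - \<i>) / (w + \<i>)) + q * (q*((of_real t - \<i>) / (of_real t + \<i>))) * (cnj q*((cnj w + \<i>) / (cnj w - \<i>)))))
     * ((of_real t + \<i>) * (w + \<i>) * (cnj w - \<i>))
     = 4 * q * (2 * of_real t - (w + cnj w))"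
    by (rule gen1[OF qq]) (use w1 w2 t1 in simp_all)
  have r: "2 * of_real t - (w + cnj w) = 2 * of_real (t - Re w)"
    by (simp add: complex_eq_iff)
  show ?thesis
    using g unfolding Eg_def cnj_icay icay_eq r by simp
qed

lemma geod_Eg:
  assumes G: "is_geod G" and z: "z \<in> geod_set G"
  shows "cmod z < 1 \<and> Eg (fst G) (snd G) z = 0"
proof -
  obtain a b where ab: "G = (a, b)" by (cases G)
  have a: "cmod a = 1" and b: "cmod b = 1" using G ab by (auto simp: is_geod_def)
  have aa: "a * cnj a = 1" using a unit_cnj by blast
  have bb: "b * cnj b = 1" using b unit_cnj by blast
  have z1: "cmod z < 1" and e: "cnj ((z - a) / (z - b)) = - (b / a) * ((z - a) / (z - b))"
    using z ab by (auto simp: geod_set_def Let_def)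
  have zb: "z - b \<noteq> 0" using z1 b by auto
  have zb': "cnj z - cnj b \<noteq> 0" using zb by (metis complex_cnj_diff complex_cnj_zero_iff)
  have a0: "a \<noteq> 0" using a by auto
  have "(cnj z - cnj a) / (cnj z - cnj b) = - (b / a) * ((z - a) / (z - b))" using e by simp
  then have "a * (cnj z - cnj a) * (z - b) = - b * (z - a) * (cnj z - cnj b)"
    using zb zb' a0 by (simp add: field_simps)
  then have "Eg a b z = 0" unfolding Eg_def using aa bb
    by algebra
  then show ?thesis using z1 ab by simp
qed

lemma icay_diff: assumes "u + \<i> \<noteq> 0" "v + \<i> \<noteq> 0"
  shows "icay q u - icay q v = 2 * \<i> * q * (u - v) / ((u + \<i>) * (v + \<i>))"
  unfolding icay_def using assms by (simp add: field_simps)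

lemma q_minus_icay: assumes "w + \<i> \<noteq> 0"
  shows "q - icay q w = 2 * \<i> * q / (w + \<i>)"
  unfolding icay_def using assms by (simp add: field_simps)

lemma one_minus_icay: assumes q: "cmod q = 1" and w: "w + \<i> \<noteq> 0"
  shows "1 - (cmod (icay q w))^2 = 4 * Im w / (cmod (w + \<i>))^2"
proof -
  have n: "cmod (icay q w) = cmod (w - \<i>) / cmod (w + \<i>)"
    unfolding icay_def using q by (simp add: norm_mult norm_divide)
  have p: "cmod (w + \<i>) > 0" using w by simp
  have "(cmod (w + \<i>))^2 - (cmod (w - \<i>))^2 = 4 * Im w"
    unfolding power2_eq_square norm_sq by (simp add: algebra_simps)
  moreover have "1 - (cmod (icay q w))^2 = ((cmod (w + \<i>))^2 - (cmod (w - \<i>))^2) / (cmod (w + \<i>))^2"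
    unfolding n using p by (simp add: field_simps power_divide)
  ultimately show ?thesis by simp
qed

lemma bdry_real: assumes "cmod q = 1" "cmod a = 1" "a \<noteq> q"
  shows "Im (cay q a) = 0"
  using Im_cay[OF assms(1,3)] assms(2) by simp

lemma bdry_icay: assumes "cmod q = 1" "cmod a = 1" "a \<noteq> q"
  shows "a = icay q (of_real (Re (cay q a)))"
proof -
  have "cay q a = of_real (Re (cay q a))" using bdry_real[OF assms] by (simp add: complex_eq_iff)
  then show ?thesis using icay_cay[OF assms(1,3)] by simp
qed

lemma disk_Im_cay: assumes "cmod q = 1" "cmod z < 1"
  shows "Im (cay q z) > 0"
proof -
  have zq: "z \<noteq> q" using assms by auto
  have "(cmod z)^2 < 1" using assms by (simp add: abs_square_less_1)
  moreover have "cmod (q - z) > 0" using zq by simp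
  ultimately show ?thesis using Im_cay[OF assms(1) zq] by simp
qed

lemma disk_icay: assumes "cmod q = 1" "cmod z < 1"
  shows "z = icay q (cay q z)"
proof -
  have "z \<noteq> q" using assms by auto
  then show ?thesis using icay_cay[OF assms(1)] by simp
qed

lemma on_geod_N:
  assumes q: "cmod q = 1" and a: "cmod a = 1" and b: "cmod b = 1" and aq: "a \<noteq> q" and bq: "b \<noteq> q"
    and z: "cmod z < 1" and e: "Eg a b z = 0"
  shows "Nf (Re (cay q a)) (Re (cay q b)) (cay q z) = 0"
proof -
  define s where "s = Re (cay q a)"
  define t where "t = Re (cay q b)"
  define w where "w = cay q z"
  have w0: "Im w > 0" unfolding w_def using disk_Im_cay[OF q z] .
  have "Eg (icay q (of_real s)) (icay q (of_real t)) (icay q w) = 0"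
    using e bdry_icay[OF q a aq] bdry_icay[OF q b bq] disk_icay[OF q z]
    unfolding s_def t_def w_def by simp
  then have "8 * q * of_real (Nf s t w) = 0" using Eg_icay[OF q w0, of s t] by simp
  then show ?thesis using q unfolding s_def t_def w_def by auto
qed

lemma on_geod_vert:
  assumes q: "cmod q = 1" and b: "cmod b = 1" and bq: "b \<noteq> q"
    and z: "cmod z < 1" and e: "Eg q b z = 0"
  shows "Re (cay q z) = Re (cay q b)"
proof -
  define t where "t = Re (cay q b)"
  define w where "w = cay q z"
  have w0: "Im w > 0" unfolding w_def using disk_Im_cay[OF q z] .
  have "Eg q (icay q (of_real t)) (icay q w) = 0"
    using e bdry_icay[OF q b bq] disk_icay[OF q z]
    unfolding t_def w_def by simp
  then have "8 * q * of_real (t - Re w) = 0" using Eg_icay_q[OF q w0, of t] by simp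
  then show ?thesis using q unfolding t_def w_def by auto
qed

lemma on_geod_PP0:
  assumes a: "cmod a = 1" and b: "cmod b = 1" and ab: "a \<noteq> b"
    and z: "cmod z < 1" and e: "Eg a b z = 0"
  shows "(1 - (cmod z)^2) * cmod (a - b) = 2 * cmod (a - z) * cmod (b - z)"
proof -
  define t where "t = Re (cay b a)"
  define w where "w = cay b z"
  have w0: "Im w > 0" unfolding w_def using disk_Im_cay[OF b z] .
  have rw: "Re w = t" unfolding w_def t_def
    using on_geod_vert[OF b a ab z] e Eg_sym by metis
  have aa: "a = icay b (of_real t)" unfolding t_def using bdry_icay[OF b a ab] .
  have zz: "z = icay b w" unfolding w_def using disk_icay[OF b z] .
  have w1: "w + \<i> \<noteq> 0" using w0 by (auto simp: complex_eq_iff)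
  have t1: "of_real t + \<i> \<noteq> 0" by (auto simp: complex_eq_iff)
  have tw: "of_real t - w = - \<i> * of_real (Im w)" using rw by (simp add: complex_eq_iff)
  have nt: "cmod (of_real t + \<i>) > 0" using t1 by simp
  have nw: "cmod (w + \<i>) > 0" using w1 by simp
  have e1: "1 - (cmod z)^2 = 4 * Im w / (cmod (w + \<i>))^2"
    unfolding zz using one_minus_icay[OF b w1] .
  have e2: "cmod (a - z) = 2 * Im w / (cmod (of_real t + \<i>) * cmod (w + \<i>))"
    unfolding aa zz icay_diff[OF t1 w1] tw using b w0 by (simp add: norm_mult norm_divide)
  have e3: "cmod (a - b) = 2 / cmod (of_real t + \<i>)"
  proof -
    have "a - b = - (b - icay b (of_real t))" unfolding aa by simp
    then show ?thesis unfolding q_minus_icay[OF t1] using b by (simp add: norm_mult norm_divide)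
  qed
  have e4: "cmod (b - z) = 2 / cmod (w + \<i>)"
    unfolding zz q_minus_icay[OF w1] using b by (simp add: norm_mult norm_divide)
  have "(1 - (cmod z)^2) * cmod (a - b) = (4 * Im w / (cmod (w + \<i>))^2) * (2 / cmod (of_real t + \<i>))"
    by (simp only: e1 e3)
  also have "\<dots> = 2 * (2 * Im w / (cmod (of_real t + \<i>) * cmod (w + \<i>))) * (2 / cmod (w + \<i>))"
    using nt nw by (simp add: field_simps power2_eq_square)
  also have "\<dots> = 2 * cmod (a - z) * cmod (b - z)" by (simp only: e2 e4)
  finally show ?thesis .
qed




lemma on_geod_PP:
  assumes a: "cmod a = 1" and b: "cmod b = 1" and ab: "a \<noteq> b"
    and z: "cmod z < 1" and e: "Eg a b z = 0"
  shows "Im (cay a z) * Im (cay b z) = 4 / (cmod (a - b))^2"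
proof -
  have pp: "(1 - (cmod z)^2) * cmod (a - b) = 2 * cmod (a - z) * cmod (b - z)"
    using on_geod_PP0[OF assms] .
  have za: "z \<noteq> a" and zb: "z \<noteq> b" using z a b by auto
  have n1: "cmod (a - z) > 0" "cmod (b - z) > 0" "cmod (a - b) > 0" using za zb ab by auto
  have ia: "Im (cay a z) = (1 - (cmod z)^2) / (cmod (a - z))^2" using Im_cay[OF a za] by (simp add: norm_minus_commute)
  have ib: "Im (cay b z) = (1 - (cmod z)^2) / (cmod (b - z))^2" using Im_cay[OF b zb] by (simp add: norm_minus_commute)
  define u where "u = 1 - (cmod z)^2"
  define v where "v = cmod (a - b)"
  have m: "cmod (a - z) * cmod (b - z) = u * v / 2" using pp unfolding u_def v_def by simp
  have "Im (cay a z) * Im (cay b z) = u^2 / (cmod (a - z) * cmod (b - z))^2"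
    unfolding ia ib u_def by (simp add: power_mult_distrib power2_eq_square)
  also have "\<dots> = u^2 / (u * v / 2)^2" unfolding m ..
  also have "\<dots> = 4 / v^2"
  proof -
    have "u > 0" unfolding u_def using z by (simp add: abs_square_less_1)
    moreover have "v > 0" unfolding v_def using n1 by simp
    ultimately show ?thesis by (simp add: field_simps power2_eq_square)
  qed
  finally show ?thesis unfolding v_def .
qed

lemma on_geod_near:
  assumes a: "cmod a = 1" and b: "cmod b = 1" and ab: "a \<noteq> b"
    and z: "cmod z < 1" and e: "Eg a b z = 0"
  shows "cmod (a - z) \<le> cmod (a - b)"
proof -
  have pp: "(1 - (cmod z)^2) * cmod (a - b) = 2 * cmod (a - z) * cmod (b - z)"
    using on_geod_PP0[OF assms] .
  have zb: "z \<noteq> b" using z b by auto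
  have bz: "cmod (b - z) > 0" using zb by auto
  have h1: "1 - cmod z \<le> cmod (b - z)" using norm_triangle_ineq2[of b z] b by simp
  have h2: "1 + cmod z \<le> 2" using z by simp
  have "1 - (cmod z)^2 = (1 - cmod z) * (1 + cmod z)" by (simp add: power2_eq_square algebra_simps)
  also have "\<dots> \<le> cmod (b - z) * 2" by (rule mult_mono[OF h1 h2]) (use z in auto)
  finally have "1 - (cmod z)^2 \<le> 2 * cmod (b - z)" by simp
  then have "2 * cmod (a - z) * cmod (b - z) \<le> 2 * cmod (b - z) * cmod (a - b)"
    unfolding pp[symmetric] by (simp add: mult_right_mono)
  then show ?thesis using bz by (simp add: mult.commute)
qed

lemma horo_P:
  assumes p: "cmod p = 1" and r: "0 < r" "r < 1" and z: "z \<in> horocycle p r"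
  shows "cmod z < 1 \<and> Im (cay p z) = (1 - r) / r"
proof -
  have h: "cmod (z - of_real (1 - r) * p) = r" and zp: "z \<noteq> p" using z by (auto simp: horocycle_def)
  define c where "c = Re z * Re p + Im z * Im p"
  have pp: "(Re p)^2 + (Im p)^2 = 1" using p cmod_power2[of p] by simp
  have h2: "(Re z - (1 - r) * Re p)^2 + (Im z - (1 - r) * Im p)^2 = r^2"
    using h cmod_power2[of "z - of_real (1 - r) * p"] by simp
  have E: "(Re z - (1 - r) * Re p)^2 + (Im z - (1 - r) * Im p)^2
     = (cmod z)^2 - 2 * ((1 - r) * c) + (1 - r)^2 * ((Re p)^2 + (Im p)^2)"
    unfolding cmod_power2 c_def by (simp add: power2_eq_square algebra_simps)
  have E2: "(cmod (p - z))^2 = (Re p)^2 + (Im p)^2 - 2 * c + (cmod z)^2"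
    unfolding cmod_power2 c_def by (simp add: power2_eq_square algebra_simps)
  have rr: "(1 - r)^2 = 1 - 2 * r + r^2" by (simp add: power2_eq_square algebra_simps)
  have E': "(Re z - (1 - r) * Re p)^2 + (Im z - (1 - r) * Im p)^2
     = (cmod z)^2 - 2 * ((1 - r) * c) + (1 - r)^2" using E unfolding pp by simp
  have E2': "(cmod (p - z))^2 = 1 - 2 * c + (cmod z)^2" using E2 unfolding pp by simp
  have m1: "2 * (1 - r) * (1 - c) = 2 * (1 - r) - 2 * ((1 - r) * c)" by (simp add: algebra_simps)
  have m2: "2 * r * (1 - c) = 2 * r - 2 * c + 2 * ((1 - r) * c)" by (simp add: algebra_simps)
  have e1: "1 - (cmod z)^2 = 2 * (1 - r) * (1 - c)"
    unfolding m1 using h2 E' rr by (smt (verit))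
  have e2: "(cmod (p - z))^2 = 2 * r * (1 - c)"
    unfolding m2 using h2 E' E2' rr by (smt (verit))
  have "cmod (p - z) > 0" using zp by simp
  then have "2 * r * (1 - c) > 0" using e2 by (metis zero_less_power)
  then have c1: "1 - c > 0" using r by (simp add: zero_less_mult_iff)
  then have "1 - (cmod z)^2 > 0" using e1 r by simp
  then have "(cmod z)^2 < 1^2" by simp
  then have z1: "cmod z < 1" by (rule power_less_imp_less_base) simp
  have "Im (cay p z) = (1 - (cmod z)^2) / (cmod (p - z))^2" using Im_cay[OF p zp] .
  also have "\<dots> = (1 - r) / r" unfolding e1 e2 using c1 r by (simp add: field_simps)
  finally show ?thesis using z1 by simp
qed

lemma cont_inj_mono:
  fixes f :: "real \<Rightarrow> real"
  assumes c: "continuous_on {a..b} f" and i: "inj_on f {a..b}" and ab: "f a \<le> f b"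
  shows "mono_on {a..b} f"
proof (rule mono_onI)
  fix x y assume x: "x \<in> {a..b}" and y: "y \<in> {a..b}" and xy: "x \<le> y"
  show "f x \<le> f y"
  proof (cases "x = y")
    case True then show ?thesis by simp
  next
    case False
    then have xy': "x < y" using xy by simp
    have ay: "f a \<le> f y"
    proof (cases "y = b")
      case True then show ?thesis using ab by simp
    next
      case False
      then have "a < y" "y < b" using x y xy' by auto
      from continuous_inj_imp_mono[OF this c i] ab show ?thesis by auto
    qed
    show ?thesis
    proof (cases "x = a")
      case True then show ?thesis using ay by simp
    next
      case False
      then have "a < x" "x < y" using x xy' by auto
      moreover have "continuous_on {a..y} f" by (rule continuous_on_subset[OF c]) (use y in auto)
      moreover have "inj_on f {a..y}" by (rule inj_on_subset[OF i]) (use y in auto)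
      ultimately have "(f a < f x \<and> f x < f y) \<or> (f y < f x \<and> f x < f a)"
        by (rule continuous_inj_imp_mono)
      then show ?thesis using ay by auto
    qed
  qed
qed

lemma cay_deriv: "z \<noteq> p \<Longrightarrow> (cay p has_field_derivative (2 * \<i> * p / (p - z)^2)) (at z)"
proof -
  assume zp: "z \<noteq> p"
  have d: "p - z \<noteq> 0" using zp by simp
  have f: "((\<lambda>z. \<i> * (p + z)) has_field_derivative \<i>) (at z)"
    using DERIV_cmult[OF DERIV_add[OF DERIV_const DERIV_ident], of \<i> p z] by simp
  have g: "((\<lambda>z. p - z) has_field_derivative -1) (at z)"
    using DERIV_diff[OF DERIV_const DERIV_ident, of p z] by simp
  have "((\<lambda>z. \<i> * (p + z) / (p - z)) has_field_derivative (\<i> * (p - z) - \<i> * (p + z) * (-1)) / ((p - z) * (p - z))) (at z)"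
    by (rule DERIV_divide[OF f g d])
  moreover have "(\<i> * (p - z) - \<i> * (p + z) * (-1)) / ((p - z) * (p - z)) = 2 * \<i> * p / (p - z)^2"
    by (simp add: algebra_simps power2_eq_square)
  ultimately show ?thesis unfolding cay_def[abs_def] by simp
qed




lemma has_vector_derivative_Re:
  assumes "(g has_vector_derivative g') F"
  shows "((\<lambda>t. Re (g t)) has_real_derivative Re g') F"
proof -
  have "((\<lambda>t. Re (g t)) has_derivative (\<lambda>h. Re (h *\<^sub>R g'))) F"
    using has_derivative_Re[OF assms[unfolded has_vector_derivative_def]] .
  then show ?thesis unfolding has_real_derivative_iff_has_vector_derivative has_vector_derivative_def
    by (simp add: scaleR_conv_of_real)
qed

lemma has_vector_derivative_Im:
  assumes "(g has_vector_derivative g') F"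
  shows "((\<lambda>t. Im (g t)) has_real_derivative Im g') F"
proof -
  have "((\<lambda>t. Im (g t)) has_derivative (\<lambda>h. Im (h *\<^sub>R g'))) F"
    using has_derivative_Im[OF assms[unfolded has_vector_derivative_def]] .
  then show ?thesis unfolding has_real_derivative_iff_has_vector_derivative has_vector_derivative_def
    by (simp add: scaleR_conv_of_real)
qed

lemma horo_length:
  fixes \<gamma> :: "real \<Rightarrow> complex"
  assumes p: "cmod p = 1" and k: "\<kappa> > 0" and arc: "arc \<gamma>"
    and pw: "\<gamma> piecewise_C1_differentiable_on {0..1}"
    and img: "\<And>t. t \<in> {0..1} \<Longrightarrow> cmod (\<gamma> t) < 1 \<and> Im (cay p (\<gamma> t)) = \<kappa>"
  shows "((\<lambda>t. 2 * norm (vector_derivative \<gamma> (at t)) / (1 - (cmod (\<gamma> t))\<^sup>2))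
           has_integral (\<bar>Re (cay p (\<gamma> 1)) - Re (cay p (\<gamma> 0))\<bar> / \<kappa>)) {0..1}"
proof -
  define f where "f t = Re (cay p (\<gamma> t))" for t
  have cont: "continuous_on {0..1} \<gamma>" using arc by (simp add: arc_def path_def)
  have inj: "inj_on \<gamma> {0..1}" using arc by (simp add: arc_def)
  obtain S where S: "finite S" and C1: "\<gamma> C1_differentiable_on {0..1} - S"
    using pw unfolding piecewise_C1_differentiable_on_def by blast
  obtain D where D: "\<And>x. x \<in> {0..1} - S \<Longrightarrow> (\<gamma> has_vector_derivative D x) (at x)"
    using C1 unfolding C1_differentiable_on_def by blast
  define cd where "cd z = 2 * \<i> * p / (p - z)^2" for z
  have np: "\<And>t. t \<in> {0..1} \<Longrightarrow> \<gamma> t \<noteq> p" using img p by fastforce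
  have contg: "continuous_on {0..1} (\<lambda>t. cay p (\<gamma> t))"
  proof -
    have np2: "\<forall>t\<in>{0..1}. p - \<gamma> t \<noteq> 0" using np by fastforce
    show ?thesis unfolding cay_def by (intro continuous_intros cont) (use np2 in blast)
  qed
  have contf: "continuous_on {0..1} f"
    unfolding f_def by (intro continuous_intros contg)
  have injf: "inj_on f {0..1}"
  proof (rule inj_onI)
    fix x y assume x: "x \<in> {0..1}" and y: "y \<in> {0..1}" and e: "f x = f y"
    have "cay p (\<gamma> x) = cay p (\<gamma> y)" using e img[OF x] img[OF y] unfolding f_def
      by (simp add: complex_eq_iff)
    then have "icay p (cay p (\<gamma> x)) = icay p (cay p (\<gamma> y))" by simp
    then have "\<gamma> x = \<gamma> y" using icay_cay[OF p np[OF x]] icay_cay[OF p np[OF y]] by simp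
    then show "x = y" using inj x y by (meson inj_onD)
  qed
  define f' where "f' t = Re (D t * cd (\<gamma> t))" for t
  have der: "(f has_real_derivative f' t) (at t) \<and> 2 * norm (vector_derivative \<gamma> (at t)) / (1 - (cmod (\<gamma> t))\<^sup>2) = \<bar>f' t\<bar> / \<kappa>"
    if t: "t \<in> {0<..<1} - S" for t
  proof -
    have t01: "t \<in> {0..1} - S" using t by auto
    have gd: "((\<lambda>s. cay p (\<gamma> s)) has_vector_derivative (D t * cd (\<gamma> t))) (at t)"
      using field_vector_diff_chain_at[OF D[OF t01] cay_deriv[OF np]] t01 unfolding cd_def o_def by auto
    have re: "((\<lambda>s. Re (cay p (\<gamma> s))) has_real_derivative Re (D t * cd (\<gamma> t))) (at t)"
      using has_vector_derivative_Re[OF gd] .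
    have im: "((\<lambda>s. Im (cay p (\<gamma> s))) has_real_derivative Im (D t * cd (\<gamma> t))) (at t)"
      using has_vector_derivative_Im[OF gd] .
    have im0: "((\<lambda>s. Im (cay p (\<gamma> s))) has_real_derivative 0) (at t)"
    proof (rule has_field_derivative_transform_within_open[of "\<lambda>s. \<kappa>" 0 t "{0<..<1}"])
      show "((\<lambda>s. \<kappa>) has_real_derivative 0) (at t)" by simp
      show "open {0<..<1::real}" by simp
      show "t \<in> {0<..<1}" using t by simp
      show "\<And>x. x \<in> {0<..<1} \<Longrightarrow> \<kappa> = Im (cay p (\<gamma> x))" using img by auto
    qed
    have imz: "Im (D t * cd (\<gamma> t)) = 0" using DERIV_unique[OF im im0] .
    have vd: "vector_derivative \<gamma> (at t) = D t" using vector_derivative_at[OF D[OF t01]] .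
    have gt: "\<gamma> t \<noteq> p" using np t01 by auto
    have pz: "cmod (p - \<gamma> t) > 0" using gt by simp
    have kk: "\<kappa> = (1 - (cmod (\<gamma> t))^2) / (cmod (p - \<gamma> t))^2"
      using img[of t] Im_cay[OF p gt] t01 by auto
    have ncd: "cmod (cd (\<gamma> t)) = 2 / (cmod (p - \<gamma> t))^2"
      unfolding cd_def using p by (simp add: norm_mult norm_divide norm_power)
    have "\<bar>f' t\<bar> = cmod (D t * cd (\<gamma> t))" unfolding f'_def using cmod_eq_Re[OF imz] by simp
    also have "\<dots> = cmod (D t) * (2 / (cmod (p - \<gamma> t))^2)" by (simp add: norm_mult ncd)
    finally have "\<bar>f' t\<bar> / \<kappa> = cmod (D t) * (2 / (cmod (p - \<gamma> t))^2) / ((1 - (cmod (\<gamma> t))^2) / (cmod (p - \<gamma> t))^2)"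
      using kk by simp
    also have "\<dots> = 2 * cmod (D t) / (1 - (cmod (\<gamma> t))^2)"
      using pz by (simp add: field_simps)
    finally show ?thesis using re unfolding f_def f'_def vd by simp
  qed
  obtain \<sigma> :: real where sg: "\<sigma> = 1 \<or> \<sigma> = -1" and sf: "\<sigma> * (f 1 - f 0) = \<bar>f 1 - f 0\<bar>"
    by (metis abs_of_nonneg abs_of_neg mult_minus_left mult_1 linorder_not_less minus_diff_eq diff_ge_0_iff_ge)
  define g where "g t = \<sigma> * f t" for t
  have contg': "continuous_on {0..1} g" unfolding g_def by (intro continuous_intros contf)
  have injg: "inj_on g {0..1}" using injf sg unfolding g_def inj_on_def by auto
  have g01: "g 0 \<le> g 1" using sf unfolding g_def by (simp add: algebra_simps)
  have mg: "mono_on {0..1} g" using cont_inj_mono[OF contg' injg g01] .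
  have gder: "(g has_real_derivative \<sigma> * f' t) (at t)" if t: "t \<in> {0<..<1} - S" for t
    unfolding g_def[abs_def] using DERIV_cmult[OF conjunct1[OF der[OF t]], of \<sigma>] .
  have gpos: "\<sigma> * f' t \<ge> 0" if t: "t \<in> {0<..<1} - S" for t
    by (rule mono_on_imp_deriv_nonneg[OF mg gder[OF t]]) (use t in auto)
  have ftc: "((\<lambda>t. \<sigma> * f' t) has_integral (g 1 - g 0)) {0..1}"
  proof (rule fundamental_theorem_of_calculus_interior_strong[OF S])
    show "0 \<le> (1::real)" by simp
    show "\<And>x. x \<in> {0<..<1} - S \<Longrightarrow> (g has_vector_derivative \<sigma> * f' x) (at x)"
      using gder by (simp add: has_real_derivative_iff_has_vector_derivative)
    show "continuous_on {0..1} g" by (rule contg')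
  qed
  have ftc2: "((\<lambda>t. \<sigma> * f' t / \<kappa>) has_integral (g 1 - g 0) / \<kappa>) {0..1}"
    using has_integral_divide[OF ftc, of \<kappa>] by simp
  show ?thesis
  proof (rule has_integral_spike_finite[of "S \<union> {0, 1}" _ _ "\<lambda>t. \<sigma> * f' t / \<kappa>"])
    show "finite (S \<union> {0, 1})" using S by simp
    show "((\<lambda>t. \<sigma> * f' t / \<kappa>) has_integral \<bar>Re (cay p (\<gamma> 1)) - Re (cay p (\<gamma> 0))\<bar> / \<kappa>) {0..1}"
      using ftc2 sf unfolding g_def f_def by (simp add: algebra_simps)
    fix t assume t: "t \<in> {0..1} - (S \<union> {0, 1})"
    then have t': "t \<in> {0<..<1} - S" by auto
    have "\<bar>f' t\<bar> = \<sigma> * f' t" using gpos[OF t'] sg by auto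
    then show "2 * norm (vector_derivative \<gamma> (at t)) / (1 - (cmod (\<gamma> t))\<^sup>2) = \<sigma> * f' t / \<kappa>"
      using conjunct2[OF der[OF t']] by simp
  qed
qed




lemma norm_icay_lt: assumes q: "cmod q = 1" and w: "Im w > 0" shows "cmod (icay q w) < 1"
proof -
  have w1: "w + \<i> \<noteq> 0" using w by (auto simp: complex_eq_iff)
  have "1 - (cmod (icay q w))^2 > 0" unfolding one_minus_icay[OF q w1] using w w1 by simp
  then have "(cmod (icay q w))^2 < 1^2" by simp
  then show ?thesis by (rule power_less_imp_less_base) simp
qed

lemma Nf_psi: assumes v: "v \<noteq> 0"
  shows "Nf s t (of_real s - 1 / v) = (1 - (s - t) * Re v) / (cmod v)^2"
proof -
  define n where "n = (Re v)^2 + (Im v)^2"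
  have n: "(cmod v)^2 = n" unfolding n_def by (rule cmod_power2)
  have n0: "n \<noteq> 0" using v n by auto
  have r1: "Re (of_real s - 1 / v) - s = - Re v / n"
    unfolding n_def by (simp add: Re_divide power2_eq_square)
  have r2: "Re (of_real s - 1 / v) - t = (s - t) - Re v / n"
    unfolding n_def by (simp add: Re_divide power2_eq_square)
  have r3: "Im (of_real s - 1 / v) = Im v / n"
    unfolding n_def by (simp add: Im_divide power2_eq_square)
  have "Nf s t (of_real s - 1 / v) = (- Re v / n) * ((s - t) - Re v / n) + (Im v / n)^2"
    unfolding Nf_def r1 r2 r3 ..
  also have "\<dots> = - Re v * (s - t) / n + ((Re v)^2 + (Im v)^2) / n^2"
    using n0 by (simp add: field_simps power2_eq_square)
  also have "\<dots> = - Re v * (s - t) / n + 1 / n"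
    using n0 unfolding n_def[symmetric] by (simp add: power2_eq_square)
  also have "\<dots> = (1 - (s - t) * Re v) / n"
    using n0 by (simp add: field_simps)
  finally show ?thesis unfolding n .
qed

lemma conn_out: assumes q: "cmod q = 1"
  shows "connected {z. cmod z < 1 \<and> Nf s t (cay q z) > 0}"
proof -
  define H where "H = {v. Im v > 0 \<and> (s - t) * Re v < 1}"
  define \<psi> where "\<psi> v = of_real s - 1 / v" for v :: complex
  have cH: "convex H" unfolding H_def
  proof (rule convexI)
    fix x y :: complex and u v :: real
    assume x: "x \<in> {v. 0 < Im v \<and> (s - t) * Re v < 1}" and y: "y \<in> {v. 0 < Im v \<and> (s - t) * Re v < 1}"
      and u0: "0 \<le> u" and v0: "0 \<le> v" and uv1: "u + v = 1"
    have uv: "0 \<le> u \<and> 0 \<le> v \<and> u + v = 1" using u0 v0 uv1 by simp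
    have "0 < u * Im x + v * Im y"
    proof (cases "u = 0")
      case True then show ?thesis using uv y by simp
    next
      case False then have "u > 0" using uv by simp
      then show ?thesis using x y uv by (simp add: add_pos_nonneg)
    qed
    moreover have "(s - t) * (u * Re x + v * Re y) = u * ((s - t) * Re x) + v * ((s - t) * Re y)"
      by (simp add: algebra_simps)
    moreover have "u * ((s - t) * Re x) + v * ((s - t) * Re y) < 1"
    proof -
      have "u * ((s - t) * Re x) \<le> u * 1" using x uv by (intro mult_left_mono) auto
      moreover have "v * ((s - t) * Re y) \<le> v * 1" using y uv by (intro mult_left_mono) auto
      moreover have "u * ((s - t) * Re x) < u * 1 \<or> v * ((s - t) * Re y) < v * 1"
      proof (cases "u = 0")
        case True then show ?thesis using uv y by simp
      next
        case False then have "u > 0" using uv by simp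
        then show ?thesis using x by simp
      qed
      ultimately show ?thesis using uv by linarith
    qed
    ultimately show "u *\<^sub>R x + v *\<^sub>R y \<in> {v. 0 < Im v \<and> (s - t) * Re v < 1}"
      by simp
  qed
  have H0: "\<And>v. v \<in> H \<Longrightarrow> v \<noteq> 0" unfolding H_def by auto
  have cpsi: "continuous_on H \<psi>"
    unfolding \<psi>_def[abs_def] using H0 by (auto intro!: continuous_intros)
  have c1: "connected (\<psi> ` H)"
    by (rule connected_continuous_image[OF cpsi convex_connected[OF cH]])
  have imH: "\<And>v. v \<in> H \<Longrightarrow> Im (\<psi> v) > 0"
  proof -
    fix v assume v: "v \<in> H"
    have "Im (\<psi> v) = Im v / (cmod v)^2" unfolding \<psi>_def by (simp add: Im_divide cmod_power2 power2_eq_square norm_sq)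
    then show "Im (\<psi> v) > 0" using v H0[OF v] unfolding H_def by simp
  qed
  have c2: "connected (icay q ` \<psi> ` H)"
  proof (rule connected_continuous_image[OF _ c1])
    have "\<forall>w\<in>\<psi> ` H. w + \<i> \<noteq> 0"
    proof
      fix w assume "w \<in> \<psi> ` H"
      then have "Im w > 0" using imH by auto
      then show "w + \<i> \<noteq> 0" by (auto simp: complex_eq_iff)
    qed
    then show "continuous_on (\<psi> ` H) (icay q)"
      unfolding icay_def[abs_def] by (intro continuous_intros) auto
  qed
  have eq: "icay q ` \<psi> ` H = {z. cmod z < 1 \<and> Nf s t (cay q z) > 0}"
  proof (intro equalityI subsetI)
    fix z assume "z \<in> icay q ` \<psi> ` H"
    then obtain v where v: "v \<in> H" and z: "z = icay q (\<psi> v)" by auto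
    have i: "Im (\<psi> v) > 0" using imH[OF v] .
    have "\<psi> v \<noteq> - \<i>" using i by (auto simp: complex_eq_iff)
    then have "cay q z = \<psi> v" unfolding z using cay_icay[OF q] by simp
    moreover have "Nf s t (\<psi> v) > 0"
      unfolding \<psi>_def using Nf_psi[OF H0[OF v]] v H0[OF v] unfolding H_def by simp
    ultimately show "z \<in> {z. cmod z < 1 \<and> Nf s t (cay q z) > 0}"
      using norm_icay_lt[OF q i] z by simp
  next
    fix z assume z: "z \<in> {z. cmod z < 1 \<and> Nf s t (cay q z) > 0}"
    define w where "w = cay q z"
    have wi: "Im w > 0" unfolding w_def using disk_Im_cay[OF q] z by simp
    have ws: "w - of_real s \<noteq> 0" using wi by (auto simp: complex_eq_iff)
    define v where "v = - 1 / (w - of_real s)"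
    have v0: "v \<noteq> 0" unfolding v_def using ws by simp
    have pv: "\<psi> v = w" unfolding \<psi>_def v_def using ws by simp
    have "Nf s t (\<psi> v) > 0" using z pv unfolding w_def by simp
    then have "(1 - (s - t) * Re v) / (cmod v)^2 > 0" unfolding \<psi>_def Nf_psi[OF v0] .
    then have a: "(s - t) * Re v < 1" using v0 by (simp add: zero_less_divide_iff)
    have "Im v = Im w / (cmod (w - of_real s))^2" unfolding v_def
      by (simp add: Im_divide cmod_power2 power2_eq_square norm_sq)
    then have b: "Im v > 0" using wi ws by simp
    have "z = icay q w" unfolding w_def using disk_icay[OF q] z by simp
    then show "z \<in> icay q ` \<psi> ` H" using a b pv unfolding H_def by (metis (mono_tags, lifting) image_eqI mem_Collect_eq)
  qed
  show ?thesis using c2 unfolding eq .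
qed




lemma inv2: "(A::real) = 2 / B \<Longrightarrow> B \<noteq> 0 \<Longrightarrow> B = 2 / A"
proof -
  assume a: "A = 2 / B" and b: "B \<noteq> 0"
  then have A0: "A \<noteq> 0" by simp
  have "A * B = 2" using a b by simp
  then show "B = 2 / A" using A0 by (simp add: eq_divide_eq mult.commute)
qed

lemma out_semi:
  assumes w: "Im w > 0" and n: "Nf u v w = 0" and vv: "(v - u) * (v - t) > 0"
  shows "Nf u t w > 0"
proof -
  define x where "x = Re w"
  have d: "Nf u t w = (x - u) * (v - t)" using n unfolding Nf_def x_def by (simp add: algebra_simps)
  have "(x - u) * (x - v) = - ((Im w)^2)" using n unfolding Nf_def x_def by simp
  then have neg: "(x - u) * (x - v) < 0" using w by simp
  have "(x - u) * (v - u) = (x - u)^2 - (x - u) * (x - v)" by (simp add: algebra_simps power2_eq_square)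
  moreover have "(x - u)^2 \<ge> 0" by simp
  ultimately have p1: "(x - u) * (v - u) > 0" using neg by linarith
  have "((x - u) * (v - u)) * ((v - u) * (v - t)) > 0" using p1 vv by simp
  then have "((x - u) * (v - t)) * ((v - u) * (v - u)) > 0" by (simp add: algebra_simps)
  moreover have "(v - u) * (v - u) > 0"
  proof -
    have "v - u \<noteq> 0" using p1 by auto
    then show ?thesis using not_real_square_gt_zero by blast
  qed
  ultimately have "(x - u) * (v - t) > 0" by (simp add: zero_less_mult_iff)
  then show ?thesis using d by simp
qed

lemma out_vert: assumes "Im w > 0" "Re w = u" shows "Nf u t w > 0"
  using assms unfolding Nf_def by simp

lemma cay_diff: assumes "a \<noteq> p" "b \<noteq> p"
  shows "cay p a - cay p b = 2 * \<i> * p * (a - b) / ((p - a) * (p - b))"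
  unfolding cay_def using assms by (simp add: field_simps)

lemma V_bdry:
  assumes p: "cmod p = 1" and a: "cmod a = 1" and b: "cmod b = 1" and ap: "a \<noteq> p" and bp: "b \<noteq> p"
  shows "\<bar>Re (cay p a) - Re (cay p b)\<bar> = 2 * cmod (a - b) / (cmod (p - a) * cmod (p - b))"
proof -
  have "Im (cay p a - cay p b) = 0" using bdry_real[OF p a ap] bdry_real[OF p b bp] by simp
  then have "\<bar>Re (cay p a - cay p b)\<bar> = cmod (cay p a - cay p b)" using cmod_eq_Re by metis
  also have "\<dots> = 2 * cmod (a - b) / (cmod (p - a) * cmod (p - b))"
    unfolding cay_diff[OF ap bp] using p by (simp add: norm_mult norm_divide)
  finally show ?thesis by simp
qed

lemma cay_plus_i: assumes "z \<noteq> p" shows "cay p z + \<i> = 2 * \<i> * p / (p - z)"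
  unfolding cay_def using assms by (simp add: field_simps)

lemma step_ratio:
  assumes p: "cmod p = 1" and z: "cmod z < 1" and z': "cmod z' < 1"
    and k: "Im (cay p z) = \<kappa>" and k': "Im (cay p z') = \<kappa>"
  shows "1 - (cmod z)^2 \<le> (1 + \<bar>Re (cay p z') - Re (cay p z)\<bar> / \<kappa>)^2 * (1 - (cmod z')^2)"
proof -
  have zp: "z \<noteq> p" and zp': "z' \<noteq> p" using z z' p by auto
  have kpos: "\<kappa> > 0" using disk_Im_cay[OF p z] k by simp
  define w where "w = cay p z"
  define w' where "w' = cay p z'"
  have n1: "cmod (p - z) = 2 / cmod (w + \<i>)"
  proof -
    have "cmod (w + \<i>) = 2 / cmod (p - z)" unfolding w_def cay_plus_i[OF zp] using p by (simp add: norm_mult norm_divide)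
    moreover have "cmod (p - z) \<noteq> 0" using zp by auto
    ultimately show ?thesis by (rule inv2)
  qed
  have n2: "cmod (p - z') = 2 / cmod (w' + \<i>)"
  proof -
    have "cmod (w' + \<i>) = 2 / cmod (p - z')" unfolding w'_def cay_plus_i[OF zp'] using p by (simp add: norm_mult norm_divide)
    moreover have "cmod (p - z') \<noteq> 0" using zp' by auto
    ultimately show ?thesis by (rule inv2)
  qed
  have wi: "cmod (w + \<i>) \<ge> \<kappa>"
  proof -
    have "cmod (w + \<i>) \<ge> \<bar>Im (w + \<i>)\<bar>" by (rule abs_Im_le_cmod)
    then show ?thesis using k kpos unfolding w_def by simp
  qed
  have dw: "cmod (w' - w) = \<bar>Re (cay p z') - Re (cay p z)\<bar>"
    using k k' unfolding w_def w'_def by (simp add: cmod_eq_Re)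
  define L where "L = \<bar>Re (cay p z') - Re (cay p z)\<bar> / \<kappa>"
  have L0: "L \<ge> 0" unfolding L_def using kpos by simp
  have "cmod (w' + \<i>) \<le> cmod (w + \<i>) + cmod (w' - w)"
    using norm_triangle_ineq[of "w + \<i>" "w' - w"] by (simp add: add.commute)
  also have "cmod (w' - w) \<le> L * cmod (w + \<i>)"
  proof -
    have "cmod (w' - w) = L * \<kappa>" unfolding dw L_def using kpos by simp
    also have "\<dots> \<le> L * cmod (w + \<i>)" using L0 wi by (simp add: mult_left_mono)
    finally show ?thesis .
  qed
  finally have r: "cmod (w' + \<i>) \<le> (1 + L) * cmod (w + \<i>)" by (simp add: algebra_simps)
  have wpos: "cmod (w + \<i>) > 0" using wi kpos by linarith
  have w'pos: "cmod (w' + \<i>) > 0"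
  proof -
    have "cmod (w' + \<i>) \<ge> \<bar>Im (w' + \<i>)\<bar>" by (rule abs_Im_le_cmod)
    moreover have "\<bar>Im (w' + \<i>)\<bar> = \<kappa> + 1" using k' kpos unfolding w'_def by simp
    ultimately show ?thesis using kpos by linarith
  qed
  have "cmod (p - z) \<le> (1 + L) * cmod (p - z')"
    unfolding n1 n2 using r wpos w'pos L0 by (simp add: field_simps)
  then have sq: "(cmod (p - z))^2 \<le> ((1 + L) * cmod (p - z'))^2"
    by (rule power_mono) simp
  have e1: "1 - (cmod z)^2 = \<kappa> * (cmod (p - z))^2" using Im_cay[OF p zp] k zp by (simp add: field_simps)
  have e2: "1 - (cmod z')^2 = \<kappa> * (cmod (p - z'))^2" using Im_cay[OF p zp'] k' zp' by (simp add: field_simps)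
  have "1 - (cmod z)^2 \<le> \<kappa> * ((1 + L) * cmod (p - z'))^2" unfolding e1 using sq kpos by simp
  also have "\<dots> = (1 + L)^2 * (1 - (cmod z')^2)" unfolding e2 by (simp add: power_mult_distrib)
  finally show ?thesis unfolding L_def .
qed

lemma chord_real:
  assumes q: "cmod q = 1"
  shows "cmod (icay q (of_real s) - icay q (of_real t)) = 2 * \<bar>s - t\<bar> / (cmod (of_real s + \<i>) * cmod (of_real t + \<i>))"
proof -
  have s1: "of_real s + \<i> \<noteq> 0" and t1: "of_real t + \<i> \<noteq> 0" by (auto simp: complex_eq_iff)
  show ?thesis unfolding icay_diff[OF s1 t1] using q
    by (simp add: norm_mult norm_divide flip: of_real_diff)
qed

lemma norm_real_i: "1 \<le> cmod (of_real s + \<i>)" "cmod (of_real s + \<i>) \<le> 1 + \<bar>s\<bar>"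
proof -
  show "1 \<le> cmod (of_real s + \<i>)" using abs_Im_le_cmod[of "of_real s + \<i>"] by simp
  show "cmod (of_real s + \<i>) \<le> 1 + \<bar>s\<bar>" using norm_triangle_ineq[of "of_real s" \<i>] by simp
qed

lemma chord_upper: assumes q: "cmod q = 1"
  shows "cmod (icay q (of_real s) - icay q (of_real t)) \<le> 2 * \<bar>s - t\<bar>"
proof -
  have "cmod (of_real s + \<i>) * cmod (of_real t + \<i>) \<ge> 1 * 1"
    using norm_real_i(1)[of s] norm_real_i(1)[of t] by (intro mult_mono) auto
  then show ?thesis unfolding chord_real[OF q]
    by (simp add: divide_le_eq mult_le_cancel_left1 mult.commute mult_left_mono)
qed

lemma chord_lower: assumes q: "cmod q = 1" and s: "\<bar>s\<bar> \<le> M" and t: "\<bar>t\<bar> \<le> M"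
  shows "2 * \<bar>s - t\<bar> / (1 + M)^2 \<le> cmod (icay q (of_real s) - icay q (of_real t))"
proof -
  have a: "cmod (of_real s + \<i>) * cmod (of_real t + \<i>) \<le> (1 + M) * (1 + M)"
    using norm_real_i(2)[of s] norm_real_i(2)[of t] s t by (intro mult_mono) auto
  have b: "cmod (of_real s + \<i>) * cmod (of_real t + \<i>) > 0"
    using norm_real_i(1)[of s] norm_real_i(1)[of t] by (metis mult_pos_pos less_le_trans zero_less_one)
  show ?thesis unfolding chord_real[OF q] power2_eq_square
    by (rule divide_left_mono[OF a]) (use b s in auto)
qed




definition pp :: "(nat \<Rightarrow> complex \<times> complex) \<Rightarrow> nat \<Rightarrow> complex" where
  "pp g n = (SOME x. x \<in> ends (g n) \<inter> ends (g (Suc n)))"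
definition qq :: "(nat \<Rightarrow> complex \<times> complex) \<Rightarrow> complex" where
  "qq g = (if fst (g 0) = pp g 0 then snd (g 0) else fst (g 0))"
definition rr :: "(nat \<Rightarrow> complex \<times> complex) \<Rightarrow> nat \<Rightarrow> complex" where
  "rr g n = (if n = 0 then qq g else pp g (n - 1))"

locale A1 =
  fixes g :: "nat \<Rightarrow> complex \<times> complex"
    and h :: "nat \<Rightarrow> real \<Rightarrow> complex"
    and P1 :: complex
  assumes geod: "\<And>n. is_geod (g n)"
    and nest: "nested g"
    and adj: "\<And>n. ends (g n) \<inter> ends (g (Suc n)) \<noteq> {}"
    and no3: "\<And>i j k. i < j \<Longrightarrow> j < k \<Longrightarrow> ends (g i) \<inter> ends (g j) \<inter> ends (g k) = {}"
    and P1: "P1 \<in> geod_set (g 0)"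
    and h_start: "h 0 0 = P1"
    and h_cont: "\<And>n. h (Suc n) 0 = h n 1"
    and h_end: "\<And>n. h n 1 \<in> geod_set (g (Suc n))"
    and h_arc: "\<And>n. arc (h n) \<and> h n piecewise_C1_differentiable_on {0..1}"
    and h_wedge: "\<And>n t. 0 < t \<Longrightarrow> t < 1 \<Longrightarrow> h n t \<in> wedge (g n) (g (Suc n))"
    and h_horo: "\<And>n p. p \<in> ends (g n) \<inter> ends (g (Suc n)) \<Longrightarrow>
        \<exists>r. 0 < r \<and> r < 1 \<and> h n ` {0..1} \<subseteq> horocycle p r"
begin

abbreviation "r \<equiv> rr g"
abbreviation "q \<equiv> qq g"
abbreviation "Q n \<equiv> h n 0"

lemma pp_in: "pp g n \<in> ends (g n) \<inter> ends (g (Suc n))"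
  unfolding pp_def using adj[of n] by (metis all_not_in_conv someI_ex)

lemma r0: "r 0 = q" unfolding rr_def by simp
lemma rS: "r (Suc n) = pp g n" unfolding rr_def by simp

lemma two_set: "x \<noteq> y \<Longrightarrow> a \<in> {x, y} \<Longrightarrow> b \<in> {x, y} \<Longrightarrow> a \<noteq> b \<Longrightarrow> {a, b} = {x, y}"
  by auto

lemma ends_g0: "ends (g 0) = {q, pp g 0} \<and> q \<noteq> pp g 0"
proof -
  have ne: "fst (g 0) \<noteq> snd (g 0)" using geod[of 0] by (simp add: is_geod_def)
  have m: "pp g 0 \<in> {fst (g 0), snd (g 0)}" using pp_in[of 0] by (simp add: ends_def)
  show ?thesis
  proof (cases "fst (g 0) = pp g 0")
    case True
    then have "q = snd (g 0)" unfolding qq_def by simp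
    then show ?thesis using True ne unfolding ends_def by (simp add: insert_commute)
  next
    case False
    then have "q = fst (g 0)" unfolding qq_def by simp
    moreover have "pp g 0 = snd (g 0)" using m False by simp
    ultimately show ?thesis using ne unfolding ends_def by simp
  qed
qed

lemma pp_ne: "pp g n \<noteq> pp g (Suc n)"
proof
  assume e: "pp g n = pp g (Suc n)"
  have "pp g n \<in> ends (g n) \<inter> ends (g (Suc n)) \<inter> ends (g (Suc (Suc n)))"
    using pp_in[of n] pp_in[of "Suc n"] e by auto
  then show False using no3[of n "Suc n" "Suc (Suc n)"] by auto
qed

lemma ends_g: "ends (g n) = {r n, r (Suc n)} \<and> r n \<noteq> r (Suc n)"
proof (cases n)
  case 0 then show ?thesis using ends_g0 r0 rS by simp
next
  case (Suc m)
  have "fst (g n) \<noteq> snd (g n)" using geod[of n] by (simp add: is_geod_def)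
  moreover have "pp g m \<in> ends (g n)" using pp_in[of m] Suc by auto
  moreover have "pp g n \<in> ends (g n)" using pp_in[of n] by auto
  moreover have "pp g m \<noteq> pp g n" using pp_ne[of m] Suc by simp
  ultimately have "ends (g n) = {pp g m, pp g n}" unfolding ends_def by (intro two_set) auto
  then show ?thesis using Suc rS pp_ne[of m] by simp
qed

lemma r_unit: "cmod (r n) = 1"
proof -
  have "r n \<in> ends (g n)" using ends_g[of n] by simp
  then show ?thesis using geod[of n] by (auto simp: ends_def is_geod_def)
qed

lemma r_ne: "r n \<noteq> r (Suc n)" using ends_g by simp

lemma r_ne2: "r (Suc (Suc n)) \<noteq> r n"
proof
  assume e: "r (Suc (Suc n)) = r n"
  have "r n \<in> ends (g n)" using ends_g[of n] by simp
  moreover have "r (Suc (Suc n)) \<in> ends (g (Suc n))" using ends_g[of "Suc n"] by simp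
  moreover have "r (Suc (Suc n)) \<in> ends (g (Suc (Suc n)))" using ends_g[of "Suc (Suc n)"] by simp
  ultimately show False using no3[of n "Suc n" "Suc (Suc n)"] e by auto
qed

lemma Eg_g: assumes "z \<in> geod_set (g n)" shows "cmod z < 1 \<and> Eg (r n) (r (Suc n)) z = 0"
proof -
  have e: "cmod z < 1 \<and> Eg (fst (g n)) (snd (g n)) z = 0" using geod_Eg[OF geod assms] .
  have "{fst (g n), snd (g n)} = {r n, r (Suc n)}" using ends_g[of n] by (simp add: ends_def)
  then have "(fst (g n) = r n \<and> snd (g n) = r (Suc n)) \<or> (fst (g n) = r (Suc n) \<and> snd (g n) = r n)"
    by (simp add: doubleton_eq_iff)
  then show ?thesis
  proof
    assume "fst (g n) = r n \<and> snd (g n) = r (Suc n)" then show ?thesis using e by simp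
  next
    assume "fst (g n) = r (Suc n) \<and> snd (g n) = r n" then show ?thesis using e Eg_sym[of "r (Suc n)" "r n" z] by simp
  qed
qed

lemma Q_in: "Q n \<in> geod_set (g n)"
proof (cases n)
  case 0 then show ?thesis using P1 h_start by simp
next
  case (Suc m) then show ?thesis using h_end[of m] h_cont[of m] by simp
qed

lemma hQ1: "h n 1 = Q (Suc n)" using h_cont[of n] by simp

definition \<kappa> :: "nat \<Rightarrow> real" where "\<kappa> n = Im (cay (r (Suc n)) (Q n))"

lemma horo: "t \<in> {0..1} \<Longrightarrow> cmod (h n t) < 1 \<and> Im (cay (r (Suc n)) (h n t)) = \<kappa> n"
proof -
  assume t: "t \<in> {0..1}"
  have "r (Suc n) \<in> ends (g n) \<inter> ends (g (Suc n))" using ends_g[of n] ends_g[of "Suc n"] by simp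
  then obtain \<rho> where \<rho>: "0 < \<rho>" "\<rho> < 1" and sub: "h n ` {0..1} \<subseteq> horocycle (r (Suc n)) \<rho>"
    using h_horo by blast
  have a: "cmod (h n s) < 1 \<and> Im (cay (r (Suc n)) (h n s)) = (1 - \<rho>) / \<rho>" if "s \<in> {0..1}" for s
  proof -
    have "h n s \<in> horocycle (r (Suc n)) \<rho>" using sub that by auto
    then show ?thesis using horo_P[OF r_unit \<rho>] by blast
  qed
  have "\<kappa> n = (1 - \<rho>) / \<rho>" unfolding \<kappa>_def using a[of 0] by simp
  then show ?thesis using a[OF t] by simp
qed

lemma \<kappa>_pos: "\<kappa> n > 0"
proof -
  have "cmod (Q n) < 1" using horo[of 0 n] by simp
  then show ?thesis unfolding \<kappa>_def using disk_Im_cay[OF r_unit] by blast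
qed

lemma \<kappa>_end: "Im (cay (r (Suc n)) (Q (Suc n))) = \<kappa> n"
  using horo[of 1 n] hQ1 by simp

definition L :: "nat \<Rightarrow> real" where
  "L n = \<bar>Re (cay (r (Suc n)) (Q (Suc n))) - Re (cay (r (Suc n)) (Q n))\<bar> / \<kappa> n"

lemma hyp_len: "hyp_length (h n) = L n"
proof -
  have "((\<lambda>t. 2 * norm (vector_derivative (h n) (at t)) / (1 - (cmod (h n t))\<^sup>2))
           has_integral (\<bar>Re (cay (r (Suc n)) (h n 1)) - Re (cay (r (Suc n)) (h n 0))\<bar> / \<kappa> n)) {0..1}"
    using horo_length[OF r_unit \<kappa>_pos conjunct1[OF h_arc] conjunct2[OF h_arc] horo] .
  then show ?thesis unfolding hyp_length_def L_def hQ1 by (rule integral_unique)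
qed

lemma L_nonneg: "L n \<ge> 0" unfolding L_def using \<kappa>_pos[of n] by simp

lemma Q_disk: "cmod (Q n) < 1" using Eg_g[OF Q_in] by simp

end



context A1 begin

lemma A_step: "1 - (cmod (Q n))^2 \<le> (1 + L n)^2 * (1 - (cmod (Q (Suc n)))^2)"
proof -
  have "Im (cay (r (Suc n)) (Q n)) = \<kappa> n" unfolding \<kappa>_def ..
  from step_ratio[OF r_unit Q_disk Q_disk this \<kappa>_end[of n]]
  show ?thesis unfolding L_def .
qed

lemma A_lower: "1 - (cmod (Q n))^2 \<ge> (1 - (cmod (Q 0))^2) * exp (- 2 * (\<Sum>k<n. L k))"
proof (induction n)
  case 0 then show ?case by simp
next
  case (Suc n)
  have a: "(1 + L n)^2 \<le> exp (2 * L n)"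
  proof -
    have "1 + L n \<le> exp (L n)" by (rule exp_ge_add_one_self)
    then have "(1 + L n)^2 \<le> (exp (L n))^2" by (rule power_mono) (use L_nonneg[of n] in simp)
    also have "\<dots> = exp (2 * L n)" by (simp add: power2_eq_square flip: exp_add)
    finally show ?thesis .
  qed
  have pos: "1 - (cmod (Q (Suc n)))^2 > 0"
    using Q_disk[of "Suc n"] by (simp add: abs_square_less_1)
  have "(1 - (cmod (Q 0))^2) * exp (- 2 * (\<Sum>k<Suc n. L k))
      = ((1 - (cmod (Q 0))^2) * exp (- 2 * (\<Sum>k<n. L k))) * exp (- 2 * L n)"
    by (simp add: algebra_simps flip: exp_add)
  also have "\<dots> \<le> (1 - (cmod (Q n))^2) * exp (- 2 * L n)"
    using Suc.IH by (simp add: mult_right_mono)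
  also have "\<dots> \<le> ((1 + L n)^2 * (1 - (cmod (Q (Suc n)))^2)) * exp (- 2 * L n)"
    using A_step[of n] by (simp add: mult_right_mono)
  also have "\<dots> \<le> (exp (2 * L n) * (1 - (cmod (Q (Suc n)))^2)) * exp (- 2 * L n)"
    using a pos by (intro mult_right_mono) auto
  also have "\<dots> = 1 - (cmod (Q (Suc n)))^2"
    by (simp add: algebra_simps flip: exp_add)
  finally show ?case .
qed

lemma dir1: assumes acc: "accumulates_to_point g \<xi>" and sm: "summable L" shows False
proof -
  define c where "c = (1 - (cmod (Q 0))^2) * exp (- 2 * suminf L)"
  have c0: "c > 0" unfolding c_def using Q_disk[of 0] by (simp add: abs_square_less_1)
  have lowc: "1 - (cmod (Q n))^2 \<ge> c" for n
  proof -
    have "(\<Sum>k<n. L k) \<le> suminf L" using sum_le_suminf[OF sm, of "{..<n}"] L_nonneg by auto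
    then have "exp (- 2 * suminf L) \<le> exp (- 2 * (\<Sum>k<n. L k))" by simp
    then have "c \<le> (1 - (cmod (Q 0))^2) * exp (- 2 * (\<Sum>k<n. L k))"
      unfolding c_def using Q_disk[of 0] by (intro mult_left_mono) (auto simp: abs_square_le_1)
    then show ?thesis using A_lower[of n] by simp
  qed
  have x1: "cmod \<xi> = 1" using acc by (simp add: accumulates_to_point_def)
  obtain N where N: "\<And>n. n \<ge> N \<Longrightarrow> geod_set (g n) \<subseteq> ball \<xi> (c / 2)"
    using acc c0 unfolding accumulates_to_point_def by (meson half_gt_zero)
  have "Q N \<in> ball \<xi> (c / 2)" using N[of N] Q_in[of N] by auto
  then have d: "cmod (\<xi> - Q N) < c / 2" by (simp add: dist_norm)
  have "1 - cmod (Q N) \<le> cmod (\<xi> - Q N)" using norm_triangle_ineq2[of \<xi> "Q N"] x1 by simp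
  then have e1: "1 - cmod (Q N) < c / 2" using d by simp
  have "1 - (cmod (Q N))^2 = (1 - cmod (Q N)) * (1 + cmod (Q N))" by (simp add: power2_eq_square algebra_simps)
  also have "\<dots> \<le> (1 - cmod (Q N)) * 2" using Q_disk[of N] by (intro mult_left_mono) auto
  also have "\<dots> < c" using e1 by simp
  finally show False using lowc[of N] by simp
qed

end



context A1 begin

definition x :: "nat \<Rightarrow> real" where "x n = Re (cay q (r n))"

lemma q_unit: "cmod q = 1" using r_unit[of 0] r0 by simp

lemma r_icay: "r k \<noteq> q \<Longrightarrow> r k = icay q (of_real (x k))"
  unfolding x_def using bdry_icay[OF q_unit r_unit] by blast

lemma x_inj: "r i \<noteq> q \<Longrightarrow> r j \<noteq> q \<Longrightarrow> r i \<noteq> r j \<Longrightarrow> x i \<noteq> x j"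
  using r_icay by metis

lemma nest_step:
  assumes n1: "n \<ge> 1" and a: "r n \<noteq> q" and b: "r (Suc n) \<noteq> q"
    and c: "r (n - 1) = q \<or> (r (n - 1) \<noteq> q \<and> (x (n - 1) - x n) * (x (n - 1) - x (Suc n)) > 0)"
  shows "r (Suc (Suc n)) \<noteq> q \<and> (x (Suc (Suc n)) - x n) * (x (Suc (Suc n)) - x (Suc n)) < 0"
proof (rule ccontr)
  assume neg: "\<not> (r (Suc (Suc n)) \<noteq> q \<and> (x (Suc (Suc n)) - x n) * (x (Suc (Suc n)) - x (Suc n)) < 0)"
  define s where "s = x n"
  define t where "t = x (Suc n)"
  define Out where "Out = {z. cmod z < 1 \<and> Nf s t (cay q z) > 0}"
  have conn: "connected Out" unfolding Out_def by (rule conn_out[OF q_unit])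
  have sub: "Out \<subseteq> Disk - geod_set (g n)"
  proof
    fix z assume z: "z \<in> Out"
    then have z1: "cmod z < 1" unfolding Out_def by simp
    have "z \<notin> geod_set (g n)"
    proof
      assume "z \<in> geod_set (g n)"
      then have "Eg (r n) (r (Suc n)) z = 0" using Eg_g by blast
      then have "Nf s t (cay q z) = 0" unfolding s_def t_def x_def
        using on_geod_N[OF q_unit r_unit r_unit a b z1] by simp
      then show False using z unfolding Out_def by simp
    qed
    then show "z \<in> Disk - geod_set (g n)" using z1 by simp
  qed
  obtain m where m: "n = Suc m" using n1 by (cases n) auto
  have mem1: "Q m \<in> Out"
  proof -
    have e: "Eg (r m) (r n) (Q m) = 0" and z1: "cmod (Q m) < 1" using Eg_g[OF Q_in[of m]] m by auto
    have im: "Im (cay q (Q m)) > 0" using disk_Im_cay[OF q_unit z1] .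
    have "Nf s t (cay q (Q m)) > 0"
    proof (cases "r m = q")
      case True
      then have "Eg q (r n) (Q m) = 0" using e by simp
      then have "Re (cay q (Q m)) = s" unfolding s_def x_def using on_geod_vert[OF q_unit r_unit a z1] by simp
      then show ?thesis using out_vert[OF im] by simp
    next
      case False
      then have pos: "(x m - s) * (x m - t) > 0" using c m unfolding s_def t_def by simp
      have "Nf (x m) s (cay q (Q m)) = 0" unfolding s_def x_def
        using on_geod_N[OF q_unit r_unit r_unit False a z1 e] .
      then have "Nf s (x m) (cay q (Q m)) = 0" using Nf_sym by metis
      then show ?thesis using out_semi[OF im _ pos] by simp
    qed
    then show ?thesis unfolding Out_def using z1 by simp
  qed
  have mem2: "Q (Suc n) \<in> Out"
  proof -
    have e: "Eg (r (Suc n)) (r (Suc (Suc n))) (Q (Suc n)) = 0" and z1: "cmod (Q (Suc n)) < 1"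
      using Eg_g[OF Q_in[of "Suc n"]] by auto
    have im: "Im (cay q (Q (Suc n))) > 0" using disk_Im_cay[OF q_unit z1] .
    have "Nf t s (cay q (Q (Suc n))) > 0"
    proof (cases "r (Suc (Suc n)) = q")
      case True
      then have "Eg q (r (Suc n)) (Q (Suc n)) = 0" using e Eg_sym by metis
      then have "Re (cay q (Q (Suc n))) = t" unfolding t_def x_def using on_geod_vert[OF q_unit r_unit b z1] by simp
      then show ?thesis using out_vert[OF im] by simp
    next
      case False
      have ns: "x (Suc (Suc n)) \<noteq> s" unfolding s_def using x_inj[OF False a r_ne2[of n]] .
      have nt: "x (Suc (Suc n)) \<noteq> t" unfolding t_def using x_inj[OF False b] r_ne[of "Suc n"] by metis
      have "(x (Suc (Suc n)) - s) * (x (Suc (Suc n)) - t) \<ge> 0" using neg False unfolding s_def t_def by simp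
      moreover have "(x (Suc (Suc n)) - s) * (x (Suc (Suc n)) - t) \<noteq> 0" using ns nt by simp
      ultimately have "(x (Suc (Suc n)) - s) * (x (Suc (Suc n)) - t) > 0" by linarith
      then have pos: "(x (Suc (Suc n)) - t) * (x (Suc (Suc n)) - s) > 0" by (simp add: mult.commute)
      have "Nf t (x (Suc (Suc n))) (cay q (Q (Suc n))) = 0" unfolding t_def x_def
        using on_geod_N[OF q_unit r_unit r_unit b False z1 e] .
      then show ?thesis using out_semi[OF im _ pos] by simp
    qed
    then have "Nf s t (cay q (Q (Suc n))) > 0" using Nf_sym by metis
    then show ?thesis unfolding Out_def using z1 by simp
  qed
  have cc: "connected_component (Disk - geod_set (g n)) (Q m) (Q (Suc n))"
    by (rule connected_componentI[OF conn sub mem1 mem2])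
  have "\<not> connected_component (Disk - geod_set (g n)) (Q m) (Q (Suc n))"
    using nest n1 Q_in[of m] Q_in[of "Suc n"] m unfolding nested_def by auto
  then show False using cc by simp
qed

lemma r1q: "r 1 \<noteq> q" using r_ne[of 0] r0 by simp
lemma r2q: "r 2 \<noteq> q" using r_ne2[of 0] r0 by (simp add: numeral_2_eq_2)

lemma nest_all: "n \<ge> 1 \<Longrightarrow> r n \<noteq> q \<and> r (Suc n) \<noteq> q \<and> r (Suc (Suc n)) \<noteq> q \<and>
    (x (Suc (Suc n)) - x n) * (x (Suc (Suc n)) - x (Suc n)) < 0"
proof (induction n rule: nat_induct_at_least)
  case base
  have "r (Suc (Suc 1)) \<noteq> q \<and> (x (Suc (Suc 1)) - x 1) * (x (Suc (Suc 1)) - x (Suc 1)) < 0"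
    by (rule nest_step) (use r1q r2q r0 in \<open>auto simp: numeral_2_eq_2\<close>)
  then show ?case using r1q r2q by (simp add: numeral_2_eq_2)
next
  case (Suc n)
  have c: "(x n - x (Suc n)) * (x n - x (Suc (Suc n))) > 0"
  proof -
    have "(x (Suc (Suc n)) - x n) * (x (Suc (Suc n)) - x (Suc n)) < 0" using Suc.IH by simp
    then show ?thesis by (smt (verit, best) mult_less_0_iff zero_less_mult_iff)
  qed
  have "r (Suc (Suc (Suc n))) \<noteq> q \<and> (x (Suc (Suc (Suc n))) - x (Suc n)) * (x (Suc (Suc (Suc n))) - x (Suc (Suc n))) < 0"
    by (rule nest_step) (use Suc.IH c Suc.hyps in auto)
  then show ?case using Suc.IH by simp
qed

end



lemma betw_real: fixes a b c :: real assumes "(c - a) * (c - b) < 0"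
  shows "\<bar>b - c\<bar> = \<bar>a - b\<bar> - \<bar>c - a\<bar> \<and> min a b \<le> min b c \<and> max b c \<le> max a b"
proof -
  have "(a < c \<and> c < b) \<or> (b < c \<and> c < a)" using assms
    by (auto simp: mult_less_0_iff)
  then show ?thesis by auto
qed

context A1 begin

definition ell :: "nat \<Rightarrow> real" where "ell n = \<bar>x n - x (Suc n)\<bar>"
definition lo :: "nat \<Rightarrow> real" where "lo n = min (x n) (x (Suc n))"
definition hi :: "nat \<Rightarrow> real" where "hi n = max (x n) (x (Suc n))"

lemma rq: "n \<ge> 1 \<Longrightarrow> r n \<noteq> q" using nest_all by blast

lemma step_facts: assumes "n \<ge> 1"
  shows "ell (Suc n) = ell n - \<bar>x (Suc (Suc n)) - x n\<bar> \<and> lo n \<le> lo (Suc n) \<and> hi (Suc n) \<le> hi n"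
  using betw_real[of "x (Suc (Suc n))" "x n" "x (Suc n)"] nest_all[OF assms]
  unfolding ell_def lo_def hi_def by simp

lemma lo_mono: assumes n1: "1 \<le> n" and nm: "n \<le> m" shows "lo n \<le> lo m \<and> hi m \<le> hi n"
  using nm
proof (induction m rule: dec_induct)
  case base then show ?case by simp
next
  case (step m)
  have "m \<ge> 1" using step.hyps n1 by simp
  then show ?case using step_facts[of m] step.IH by auto
qed

lemma ell_eq: "ell n = hi n - lo n" unfolding ell_def hi_def lo_def by auto

lemma x_in: "1 \<le> n \<Longrightarrow> n \<le> m \<Longrightarrow> lo n \<le> x m \<and> x m \<le> hi n"
  using lo_mono[of n m] unfolding lo_def hi_def by auto

lemma x_close: "1 \<le> n \<Longrightarrow> n \<le> m \<Longrightarrow> n \<le> m' \<Longrightarrow> \<bar>x m - x m'\<bar> \<le> ell n"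
  using x_in[of n m] x_in[of n m'] ell_eq[of n] by auto

lemma ell_mono: "1 \<le> n \<Longrightarrow> n \<le> m \<Longrightarrow> ell m \<le> ell n"
  using lo_mono[of n m] ell_eq by auto

lemma x_bound: "1 \<le> m \<Longrightarrow> \<bar>x m\<bar> \<le> \<bar>x 1\<bar> + \<bar>x 2\<bar>"
  using x_in[of 1 m] unfolding lo_def hi_def by (auto simp: numeral_2_eq_2)

lemma r_icay1: "1 \<le> n \<Longrightarrow> r n = icay q (of_real (x n))" using r_icay rq by blast

lemma caseA:
  assumes sm: "\<And>e. e > 0 \<Longrightarrow> \<exists>n\<ge>1. ell n < e"
  shows "\<exists>\<xi>. accumulates_to_point g \<xi>"
proof -
  have "Cauchy x"
  proof (rule CauchyI)
    fix e :: real assume e: "e > 0"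
    obtain n where n: "n \<ge> 1" "ell n < e" using sm[OF e] by blast
    have "\<forall>m\<ge>n. \<forall>m'\<ge>n. norm (x m - x m') < e" using x_close[OF n(1)] n(2) by fastforce
    then show "\<exists>M. \<forall>m\<ge>M. \<forall>n\<ge>M. norm (x m - x n) < e" by blast
  qed
  then obtain X where X: "x \<longlonglongrightarrow> X" using Cauchy_convergent_iff convergent_def by blast
  define \<xi> where "\<xi> = icay q (of_real X)"
  have X_in: "lo n \<le> X \<and> X \<le> hi n" if "n \<ge> 1" for n
  proof
    show "lo n \<le> X" by (rule LIMSEQ_le_const[OF X]) (use x_in that in blast)
    show "X \<le> hi n" by (rule LIMSEQ_le_const2[OF X]) (use x_in that in blast)
  qed
  have xi1: "cmod \<xi> = 1"
  proof -
    have a: "cmod (of_real X - \<i>) = cmod (of_real X + \<i>)" by (simp add: cmod_def)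
    have b: "cmod (of_real X + \<i>) \<noteq> 0" by (simp add: complex_eq_iff)
    show ?thesis unfolding \<xi>_def icay_def using q_unit a b by (simp add: norm_mult norm_divide)
  qed
  have "accumulates_to_point g \<xi>"
    unfolding accumulates_to_point_def
  proof (intro conjI allI impI xi1)
    fix e :: real assume e: "e > 0"
    obtain n0 where n0: "n0 \<ge> 1" "ell n0 < e / 4" using sm[of "e / 4"] e by auto
    have "\<forall>n\<ge>n0. geod_set (g n) \<subseteq> ball \<xi> e"
    proof (intro allI impI subsetI)
      fix n z assume n: "n \<ge> n0" and z: "z \<in> geod_set (g n)"
      have n1: "n \<ge> 1" using n n0 by simp
      have ez: "cmod z < 1" "Eg (r n) (r (Suc n)) z = 0" using Eg_g[OF z] by auto
      have "cmod (r n - z) \<le> cmod (r n - r (Suc n))"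
        using on_geod_near[OF r_unit r_unit r_ne ez] .
      also have "\<dots> \<le> 2 * \<bar>x n - x (Suc n)\<bar>"
        using r_icay1[OF n1] r_icay1[of "Suc n"] n1 chord_upper[OF q_unit] by simp
      also have "\<dots> \<le> 2 * ell n0" using x_close[OF n0(1), of n "Suc n"] n by simp
      finally have a: "cmod (r n - z) \<le> 2 * ell n0" .
      have "cmod (r n - \<xi>) \<le> 2 * \<bar>x n - X\<bar>"
        unfolding \<xi>_def using r_icay1[OF n1] chord_upper[OF q_unit] by simp
      also have "\<dots> \<le> 2 * ell n0"
      proof -
        have "\<bar>x n - X\<bar> \<le> ell n0"
          using x_in[OF n0(1) n] X_in[OF n0(1)] ell_eq[of n0] by (auto simp: abs_diff_le_iff)
        then show ?thesis by simp
      qed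
      finally have b: "cmod (r n - \<xi>) \<le> 2 * ell n0" .
      have "cmod (\<xi> - z) \<le> cmod (r n - z) + cmod (r n - \<xi>)"
        using norm_triangle_ineq4[of "r n - z" "r n - \<xi>"] by (simp add: norm_minus_commute)
      also have "\<dots> < e" using a b n0(2) by simp
      finally show "z \<in> ball \<xi> e" by (simp add: dist_norm)
    qed
    then show "\<exists>N. \<forall>n\<ge>N. geod_set (g n) \<subseteq> ball \<xi> e" by blast
  qed
  then show ?thesis by blast
qed

end



context A1 begin

definition d :: "nat \<Rightarrow> real" where "d n = cmod (r n - r (Suc n))"
definition ee :: "nat \<Rightarrow> real" where "ee n = cmod (r (Suc (Suc n)) - r n)"

lemma d_pos: "d n > 0" unfolding d_def using r_ne[of n] by simp

lemma ee_nonneg: "ee n \<ge> 0" unfolding ee_def by simp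

lemma kappa_rec: "\<kappa> (Suc n) * \<kappa> n = 4 / (d (Suc n))^2"
proof -
  have ez: "cmod (Q (Suc n)) < 1" "Eg (r (Suc n)) (r (Suc (Suc n))) (Q (Suc n)) = 0"
    using Eg_g[OF Q_in[of "Suc n"]] by auto
  have "Im (cay (r (Suc n)) (Q (Suc n))) * Im (cay (r (Suc (Suc n))) (Q (Suc n))) = 4 / (cmod (r (Suc n) - r (Suc (Suc n))))^2"
    using on_geod_PP[OF r_unit r_unit r_ne ez] .
  then show ?thesis unfolding \<kappa>_end d_def by (simp add: \<kappa>_def mult.commute)
qed

lemma kappa2: "\<kappa> (Suc (Suc n)) = \<kappa> n * (d (Suc n) / d (Suc (Suc n)))^2"
proof -
  have a: "\<kappa> (Suc n) * \<kappa> n = 4 / (d (Suc n))^2" by (rule kappa_rec)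
  have b: "\<kappa> (Suc (Suc n)) * \<kappa> (Suc n) = 4 / (d (Suc (Suc n)))^2" by (rule kappa_rec)
  have k1: "\<kappa> (Suc n) > 0" by (rule \<kappa>_pos)
  have d1: "d (Suc n) > 0" "d (Suc (Suc n)) > 0" using d_pos by auto
  have "\<kappa> (Suc (Suc n)) = (\<kappa> (Suc (Suc n)) * \<kappa> (Suc n)) / \<kappa> (Suc n)" using k1 by simp
  also have "\<dots> = 4 / (d (Suc (Suc n)))^2 / \<kappa> (Suc n)" using b by simp
  also have "\<kappa> (Suc n) = (\<kappa> (Suc n) * \<kappa> n) / \<kappa> n" using \<kappa>_pos[of n] by simp
  also have "\<dots> = 4 / (d (Suc n))^2 / \<kappa> n" using a by simp
  finally show ?thesis using d1 \<kappa>_pos[of n] by (simp add: field_simps power2_eq_square)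
qed

lemma d_step: "d (Suc (Suc n)) \<le> d (Suc n) + ee (Suc n)"
  unfolding d_def ee_def
  using norm_triangle_ineq[of "r (Suc (Suc n)) - r (Suc n)" "r (Suc n) - r (Suc (Suc (Suc n)))"]
  by (simp add: norm_minus_commute)

lemma L_formula: "L n = 2 * ee n / (d n * d (Suc n) * \<kappa> n)"
proof -
  define p where "p = r (Suc n)"
  have e1: "cmod (Q n) < 1" "Eg (r n) p (Q n) = 0" using Eg_g[OF Q_in[of n]] unfolding p_def by auto
  have e2: "cmod (Q (Suc n)) < 1" "Eg p (r (Suc (Suc n))) (Q (Suc n)) = 0"
    using Eg_g[OF Q_in[of "Suc n"]] unfolding p_def by auto
  have pu: "cmod p = 1" unfolding p_def by (rule r_unit)
  have np1: "r n \<noteq> p" unfolding p_def by (rule r_ne)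
  have np2: "r (Suc (Suc n)) \<noteq> p" unfolding p_def using r_ne[of "Suc n"] by metis
  have v1: "Re (cay p (Q n)) = Re (cay p (r n))"
    using on_geod_vert[OF pu r_unit np1 e1(1)] e1(2) Eg_sym by metis
  have v2: "Re (cay p (Q (Suc n))) = Re (cay p (r (Suc (Suc n))))"
    using on_geod_vert[OF pu r_unit np2 e2(1)] e2(2) by metis
  have "\<bar>Re (cay p (r (Suc (Suc n)))) - Re (cay p (r n))\<bar> = 2 * cmod (r (Suc (Suc n)) - r n) / (cmod (p - r (Suc (Suc n))) * cmod (p - r n))"
    using V_bdry[OF pu r_unit r_unit np2 np1] .
  also have "\<dots> = 2 * ee n / (d n * d (Suc n))"
    unfolding ee_def d_def p_def by (simp add: norm_minus_commute mult.commute)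
  finally show ?thesis unfolding L_def p_def[symmetric] v1 v2 by (simp add: field_simps)
qed

lemma caseB:
  assumes lam: "la > 0" and lb: "\<And>n. n \<ge> 1 \<Longrightarrow> ell n \<ge> la"
  shows "summable L"
proof -
  define M where "M = \<bar>x 1\<bar> + \<bar>x 2\<bar>"
  have M0: "M \<ge> 0" unfolding M_def by simp
  define \<delta> where "\<delta> = min (d 0) (2 * la / (1 + M)^2)"
  have \<delta>0: "\<delta> > 0" unfolding \<delta>_def using d_pos[of 0] lam M0 by simp
  have d_low: "d n \<ge> \<delta>" for n
  proof (cases "n = 0")
    case True then show ?thesis unfolding \<delta>_def by simp
  next
    case False
    then have n1: "n \<ge> 1" by simp
    have "2 * \<bar>x n - x (Suc n)\<bar> / (1 + M)^2 \<le> cmod (icay q (of_real (x n)) - icay q (of_real (x (Suc n))))"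
      by (rule chord_lower[OF q_unit]) (use x_bound n1 in \<open>auto simp: M_def\<close>)
    also have "\<dots> = d n" unfolding d_def using r_icay1[OF n1] r_icay1[of "Suc n"] n1 by simp
    finally have a: "2 * ell n / (1 + M)^2 \<le> d n" unfolding ell_def .
    have "2 * la / (1 + M)^2 \<le> 2 * ell n / (1 + M)^2"
      using lb[OF n1] M0 by (simp add: divide_right_mono)
    then show ?thesis using a unfolding \<delta>_def by simp
  qed
  have ee_up: "ee (Suc n) \<le> 2 * (ell (Suc n) - ell (Suc (Suc n)))" for n
  proof -
    have n1: "Suc n \<ge> 1" by simp
    have "ee (Suc n) \<le> 2 * \<bar>x (Suc (Suc (Suc n))) - x (Suc n)\<bar>"
      unfolding ee_def using r_icay1[OF n1] r_icay1[of "Suc (Suc (Suc n))"] chord_upper[OF q_unit] by simp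
    also have "\<dots> = 2 * (ell (Suc n) - ell (Suc (Suc n)))" using step_facts[OF n1] by simp
    finally show ?thesis .
  qed
  have sumee1: "summable (\<lambda>n. ee (Suc n))"
  proof (rule summableI_nonneg_bounded[where x = "2 * ell 1"])
    show "\<And>n. 0 \<le> ee (Suc n)" by (rule ee_nonneg)
    fix N
    have "(\<Sum>i<N. ee (Suc i)) \<le> (\<Sum>i<N. 2 * (ell (Suc i) - ell (Suc (Suc i))))"
      by (rule sum_mono) (rule ee_up)
    also have "\<dots> = 2 * (\<Sum>i<N. ell (Suc i) - ell (Suc (Suc i)))" by (simp add: sum_distrib_left)
    also have "(\<Sum>i<N. ell (Suc i) - ell (Suc (Suc i))) = ell 1 - ell (Suc N)"
      using sum_lessThan_telescope'[of "\<lambda>i. ell (Suc i)" N] by simp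
    also have "2 * (ell 1 - ell (Suc N)) \<le> 2 * ell 1" unfolding ell_def by simp
    finally show "(\<Sum>i<N. ee (Suc i)) \<le> 2 * ell 1" .
  qed
  have sumee: "summable ee" using sumee1 summable_Suc_iff by blast
  define E where "E = suminf ee"
  define m0 where "m0 = min (\<kappa> 0) (\<kappa> 1)"
  have m00: "m0 > 0" unfolding m0_def using \<kappa>_pos by simp
  have ratio: "(d (Suc n) / d (Suc (Suc n)))^2 \<ge> exp (- 2 * ee (Suc n) / \<delta>)" for n
  proof -
    have dp: "d (Suc n) > 0" "d (Suc (Suc n)) > 0" using d_pos by auto
    have "d (Suc (Suc n)) \<le> d (Suc n) + ee (Suc n)" by (rule d_step)
    also have "ee (Suc n) \<le> d (Suc n) * (ee (Suc n) / \<delta>)"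
    proof -
      have "ee (Suc n) = \<delta> * (ee (Suc n) / \<delta>)" using \<delta>0 by simp
      also have "\<dots> \<le> d (Suc n) * (ee (Suc n) / \<delta>)"
        using d_low[of "Suc n"] ee_nonneg[of "Suc n"] \<delta>0 by (intro mult_right_mono) auto
      finally show ?thesis .
    qed
    also have "d (Suc n) + d (Suc n) * (ee (Suc n) / \<delta>) = d (Suc n) * (1 + ee (Suc n) / \<delta>)"
      by (simp add: algebra_simps)
    also have "\<dots> \<le> d (Suc n) * exp (ee (Suc n) / \<delta>)"
      using dp by (intro mult_left_mono exp_ge_add_one_self) auto
    finally have "d (Suc (Suc n)) \<le> d (Suc n) * exp (ee (Suc n) / \<delta>)" by simp
    then have "exp (- ee (Suc n) / \<delta>) \<le> d (Suc n) / d (Suc (Suc n))"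
      using dp by (simp add: field_simps exp_minus)
    then have "(exp (- ee (Suc n) / \<delta>))^2 \<le> (d (Suc n) / d (Suc (Suc n)))^2"
      by (rule power_mono) simp
    also have "(exp (- ee (Suc n) / \<delta>))^2 = exp (- 2 * ee (Suc n) / \<delta>)"
      by (simp add: power2_eq_square flip: exp_add)
    finally show ?thesis .
  qed
  define P where "P n \<longleftrightarrow> \<kappa> n \<ge> m0 * exp (- (2 / \<delta>) * (\<Sum>k<n. ee k))" for n
  have PP: "P n \<and> P (Suc n)" for n
  proof (induction n)
    case 0
    have a: "m0 \<le> \<kappa> 0" "m0 \<le> \<kappa> 1" unfolding m0_def by auto
    have "exp (- (2 / \<delta>) * ee 0) \<le> 1" using ee_nonneg[of 0] \<delta>0 by simp
    then have "m0 * exp (- (2 / \<delta>) * ee 0) \<le> m0" using m00 by (simp add: mult_le_cancel_left1)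
    then show ?case unfolding P_def using a by simp
  next
    case (Suc n)
    have "P (Suc (Suc n))"
    proof -
      have "m0 * exp (- (2 / \<delta>) * (\<Sum>k<Suc (Suc n). ee k))
          \<le> m0 * exp (- (2 / \<delta>) * (\<Sum>k<n. ee k) + (- 2 * ee (Suc n) / \<delta>))"
      proof -
        have "(\<Sum>k<Suc (Suc n). ee k) = (\<Sum>k<n. ee k) + ee n + ee (Suc n)" by simp
        then have "- (2 / \<delta>) * (\<Sum>k<Suc (Suc n). ee k) \<le> - (2 / \<delta>) * (\<Sum>k<n. ee k) + (- 2 * ee (Suc n) / \<delta>)"
          using ee_nonneg[of n] \<delta>0 by (simp add: field_simps)
        then show ?thesis using m00 by simp
      qed
      also have "\<dots> = (m0 * exp (- (2 / \<delta>) * (\<Sum>k<n. ee k))) * exp (- 2 * ee (Suc n) / \<delta>)"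
        unfolding exp_add[symmetric] by (simp only: mult.assoc exp_add)
      also have "\<dots> \<le> \<kappa> n * exp (- 2 * ee (Suc n) / \<delta>)"
        using Suc.IH unfolding P_def by (intro mult_right_mono) auto
      also have "\<dots> \<le> \<kappa> n * (d (Suc n) / d (Suc (Suc n)))^2"
        using ratio[of n] \<kappa>_pos[of n] by (intro mult_left_mono) auto
      also have "\<dots> = \<kappa> (Suc (Suc n))" by (simp add: kappa2)
      finally show ?thesis unfolding P_def .
    qed
    then show ?case using Suc.IH by simp
  qed
  define c where "c = m0 * exp (- (2 / \<delta>) * E)"
  have c0: "c > 0" unfolding c_def using m00 by simp
  have kc: "\<kappa> n \<ge> c" for n
  proof -
    have "(\<Sum>k<n. ee k) \<le> E" unfolding E_def using sum_le_suminf[OF sumee, of "{..<n}"] ee_nonneg by auto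
    then have "- (2 / \<delta>) * E \<le> - (2 / \<delta>) * (\<Sum>k<n. ee k)" using \<delta>0 by (simp add: field_simps)
    then have "c \<le> m0 * exp (- (2 / \<delta>) * (\<Sum>k<n. ee k))" unfolding c_def using m00 by simp
    then show ?thesis using PP[of n] unfolding P_def by simp
  qed
  have Lb: "norm (L n) \<le> (2 / (\<delta> * \<delta> * c)) * ee n" for n
  proof -
    have pos: "d n * d (Suc n) * \<kappa> n \<ge> \<delta> * \<delta> * c"
      using d_low[of n] d_low[of "Suc n"] kc[of n] \<delta>0 c0 by (intro mult_mono) (auto intro: mult_nonneg_nonneg)
    have "norm (L n) = L n" using L_nonneg[of n] by simp
    also have "\<dots> = 2 * ee n / (d n * d (Suc n) * \<kappa> n)" by (rule L_formula)
    also have "\<dots> \<le> 2 * ee n / (\<delta> * \<delta> * c)"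
    proof (rule divide_left_mono[OF pos])
      show "0 \<le> 2 * ee n" using ee_nonneg[of n] by simp
      have "\<delta> * \<delta> * c > 0" using \<delta>0 c0 by simp
      moreover have "d n * d (Suc n) * \<kappa> n > 0" using d_pos[of n] d_pos[of "Suc n"] \<kappa>_pos[of n] by simp
      ultimately show "0 < d n * d (Suc n) * \<kappa> n * (\<delta> * \<delta> * c)" by simp
    qed
    finally show ?thesis by simp
  qed
  show ?thesis
    by (rule summable_comparison_test[OF _ summable_mult[OF sumee]]) (use Lb in blast)
qed

end



context A1 begin

lemma main: "(\<exists>\<xi>. accumulates_to_point g \<xi>) \<longleftrightarrow> \<not> summable (\<lambda>n. hyp_length (h n))"
proof -
  have eq: "(\<lambda>n. hyp_length (h n)) = L" using hyp_len by auto
  show ?thesis unfolding eq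
  proof
    assume "\<exists>\<xi>. accumulates_to_point g \<xi>"
    then obtain \<xi> where "accumulates_to_point g \<xi>" by blast
    then show "\<not> summable L" using dir1 by blast
  next
    assume ns: "\<not> summable L"
    show "\<exists>\<xi>. accumulates_to_point g \<xi>"
    proof (cases "\<forall>e>0. \<exists>n\<ge>1. ell n < e")
      case True then show ?thesis using caseA by blast
    next
      case False
      then obtain la where la0: "la > 0" and la1: "\<forall>n\<ge>1. \<not> ell n < la" by blast
      have la2: "\<And>n. n \<ge> 1 \<Longrightarrow> ell n \<ge> la" using la1 by (simp add: not_less)
      have "summable L" by (rule caseB[OF la0 la2])
      then show ?thesis using ns by simp
    qed
  qed
qed

end

theorem propositionA1:
  fixes g :: "nat \<Rightarrow> complex \<times> complex"
    and h :: "nat \<Rightarrow> real \<Rightarrow> complex"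
    and P1 :: complex
  assumes geod: "\<And>n. is_geod (g n)"
    and nest: "nested g"
    and adj: "\<And>n. ends (g n) \<inter> ends (g (Suc n)) \<noteq> {}"
    and no3: "\<And>i j k. i < j \<Longrightarrow> j < k \<Longrightarrow> ends (g i) \<inter> ends (g j) \<inter> ends (g k) = {}"
    and P1: "P1 \<in> geod_set (g 0)"
    and h_start: "h 0 0 = P1"
    and h_cont: "\<And>n. h (Suc n) 0 = h n 1"
    and h_end: "\<And>n. h n 1 \<in> geod_set (g (Suc n))"
    and h_arc: "\<And>n. arc (h n) \<and> h n piecewise_C1_differentiable_on {0..1}"
    and h_wedge: "\<And>n t. 0 < t \<Longrightarrow> t < 1 \<Longrightarrow> h n t \<in> wedge (g n) (g (Suc n))"
    and h_horo: "\<And>n p. p \<in> ends (g n) \<inter> ends (g (Suc n)) \<Longrightarrow>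
        \<exists>r. 0 < r \<and> r < 1 \<and> h n ` {0..1} \<subseteq> horocycle p r"
  shows "(\<exists>\<xi>. accumulates_to_point g \<xi>) \<longleftrightarrow> \<not> summable (\<lambda>n. hyp_length (h n))"
proof -
  interpret A1 g h P1
    by (rule A1.intro; fact)
  show ?thesis by (rule main)
qed



end
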